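(* Let $\phi$ be an orientation-preserving isometry of a spin, closed, hyperbolic $4$-manifold $M=\Gamma\backslash H^4$, and let $\hat\phi$ be a lift of $\phi$ to a symmetry of a spin structure $\hat\Gamma\backslash\mathrm{SU}(1,1;\mathbb H)$ on $M$. Let $f\in\mathrm{SO}^+(4,1)$ be such that $\phi=f_\star$, and let $\hat f\in\mathrm{SU}(1,1;\mathbb H)$ be the lift of $f$ such that $\hat\phi=\hat f_\star$. Let $P$ be an isolated fixed point of $\phi$, and let $x\in H^4$ with $\Gamma x=P$. Let $g\in\mathrm{SO}^+(4,1)$ with $ge_5=x$, and let $\hat g\in\mathrm{SU}(1,1;\mathbb H)$ be a lift of $g$. Let $\gamma$ be the unique element of $\Gamma$ such that $\gamma fx=x$, and let $\hat\gamma$ be the unique element of $\hat\Gamma$ lifting $\gamma$. Then $\hat g^{-1}\hat\gamma\hat f\hat g=\mathrm{diag}(p,q)$ with $p$ and $q$ unit quaternions, and $$\nu(\hat\phi,P)=\frac{1}{2(\mathrm{Re}(p)-\mathrm{Re}(q))}.$$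
   Context: $\mathrm{SU}(1,1;\mathbb H)=\{A\in\mathbb H(2):A^*JA=J\}$, $J=\mathrm{diag}(1,-1)$, acts on $B^4=\{q\in\mathbb H:|q|<1\}$ by $\begin{pmatrix}a&b\\c&d\end{pmatrix}\cdot q=(aq+b)(cq+d)^{-1}$. Identify $q_0+q_1\mathbf i+q_2\mathbf j+q_3\mathbf k$ with $(q_0,\dots,q_3)\in\mathbb R^4$, let $H^4=\{x\in\mathbb R^5: x_1^2+\dots+x_4^2-x_5^2=-1,\ x_5>0\}$ and $\zeta:B^4\to H^4$, $\zeta(y)=(2y/(1-|y|^2),(1+|y|^2)/(1-|y|^2))$. The double covering epimorphism $\eta:\mathrm{SU}(1,1;\mathbb H)\to\mathrm{SO}^+(4,1)$ (representing $\mathrm{Spin}^+(4,1)$) is characterized by $\zeta(A\cdot y)=\eta(A)\zeta(y)$. $\Gamma\subset\mathrm{SO}^+(4,1)$ is discrete and torsion-free with $M$ closed, and $\hat\Gamma\subset\mathrm{SU}(1,1;\mathbb H)$ maps isomorphically onto $\Gamma$ under $\eta$. Isometries $f_\star(\Gamma x)=\Gamma fx$ ($f$ normalizing $\Gamma$) and symmetries $\hat f_\star(\hat\Gamma\hat h)=\hat\Gamma\hat f\hat h$ ($\hat f$ normalizing $\hat\Gamma$). $\mathrm{Spin}(4)=\eta^{-1}(\mathrm{Stab}(e_5))=\{\mathrm{diag}(p,q):|p|=|q|=1\}$, with half-spin representations (Atiyah–Bott convention) $\Delta_4^+(\mathrm{diag}(p,q))=\Psi_1(p)$, $\Delta_4^-(\mathrm{diag}(p,q))=\Psi_1(q)$,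 where $\Psi_1(a+b\mathbf j)=\begin{pmatrix}a&b\\-\overline b&\overline a\end{pmatrix}$ for $a,b\in\mathbb C$. For an isolated fixed point $P=\Gamma ge_5$ of $\phi=\hat f_\star$-projection, there is a unique $s\in\mathrm{Spin}(4)$ with $\hat\Gamma\hat f\hat g=\hat\Gamma\hat gs$, and the local contribution of $P$ to the Atiyah–Singer $G$-spin formula is $\nu(\hat\phi,P)=\dfrac{\mathrm{tr}\,\Delta_4^+(s)-\mathrm{tr}\,\Delta_4^-(s)}{|\det(I-d\phi_P)|}$, with $d\phi_P$ the differential of $\phi$ at $P$. *)

theory Defs
  imports "HOL-Analysis.Analysis"
begin

datatype quat = Quat (qre: real) (qi: real) (qj: real) (qk: real)

lemma quat_eqI: "qre a = qre b \<Longrightarrow> qi a = qi b \<Longrightarrow> qj a = qj b \<Longrightarrow> qk a = qk b \<Longrightarrow> a = b"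
  by (cases a; cases b) auto

instantiation quat :: "{ring_1, inverse}"
begin
definition "0 = Quat 0 0 0 0"
definition "1 = Quat 1 0 0 0"
definition "a + b = Quat (qre a + qre b) (qi a + qi b) (qj a + qj b) (qk a + qk b)"
definition "- a = Quat (- qre a) (- qi a) (- qj a) (- qk a)"
definition "a - b = Quat (qre a - qre b) (qi a - qi b) (qj a - qj b) (qk a - qk b)"
definition "a * b = Quat
   (qre a * qre b - qi a * qi b - qj a * qj b - qk a * qk b)
   (qre a * qi b + qi a * qre b + qj a * qk b - qk a * qj b)
   (qre a * qj b - qi a * qk b + qj a * qre b + qk a * qi b)
   (qre a * qk b + qi a * qj b - qj a * qi b + qk a * qre b)"
definition "inverse a = (let n = (qre a)\<^sup>2 + (qi a)\<^sup>2 + (qj a)\<^sup>2 + (qk a)\<^sup>2 in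
   Quat (qre a / n) (- qi a / n) (- qj a / n) (- qk a / n))"
definition "divide a b = a * inverse (b :: quat)"
instance
  by standard (auto intro!: quat_eqI simp: zero_quat_def one_quat_def plus_quat_def
      uminus_quat_def minus_quat_def times_quat_def algebra_simps)
end

lemma quat_simps [simp]:
  "qre 0 = 0" "qi 0 = 0" "qj 0 = 0" "qk 0 = 0"
  "qre 1 = 1" "qi 1 = 0" "qj 1 = 0" "qk 1 = 0"
  "qre (a + b) = qre a + qre b" "qi (a + b) = qi a + qi b"
  "qj (a + b) = qj a + qj b" "qk (a + b) = qk a + qk b"
  by (simp_all add: zero_quat_def one_quat_def plus_quat_def)

definition qcnj :: "quat \<Rightarrow> quat" where
  "qcnj a = Quat (qre a) (- qi a) (- qj a) (- qk a)"

definition qnorm :: "quat \<Rightarrow> real" where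
  "qnorm a = sqrt ((qre a)\<^sup>2 + (qi a)\<^sup>2 + (qj a)\<^sup>2 + (qk a)\<^sup>2)"

definition q2v :: "quat \<Rightarrow> real^4" where
  "q2v a = vector [qre a, qi a, qj a, qk a]"

definition v2q :: "real^4 \<Rightarrow> quat" where
  "v2q v = Quat (v$1) (v$2) (v$3) (v$4)"

type_synonym qmat = "quat^2^2"

definition qmat :: "quat \<Rightarrow> quat \<Rightarrow> quat \<Rightarrow> quat \<Rightarrow> qmat" where
  "qmat a b c d = vector [vector [a, b], vector [c, d]]"

definition qadj :: "qmat \<Rightarrow> qmat" where
  "qadj A = (\<chi> i j. qcnj (A$j$i))"

definition Jq :: qmat where "Jq = qmat 1 0 0 (-1)"

definition SU11H :: "qmat set" where
  "SU11H = {A. qadj A ** Jq ** A = Jq}"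

definition B4 :: "quat set" where "B4 = {q. qnorm q < 1}"

definition moebius :: "qmat \<Rightarrow> quat \<Rightarrow> quat" where
  "moebius A q = (A$1$1 * q + A$1$2) * inverse (A$2$1 * q + A$2$2)"

text \<open>Coordinates of R^5 are indexed 1,2,3,4,5 (in the type 5 the numeral 5 denotes the
  remaining fifth index).\<close>

definition Qform :: "real^5^5" where
  "Qform = (\<chi> i j. if i = j then (if i = 5 then -1 else 1) else 0)"

definition H4 :: "(real^5) set" where
  "H4 = {x. (x$1)\<^sup>2 + (x$2)\<^sup>2 + (x$3)\<^sup>2 + (x$4)\<^sup>2 - (x$5)\<^sup>2 = -1 \<and> x$5 > 0}"

definition e5 :: "real^5" where "e5 = axis 5 1"

definition SO41p :: "(real^5^5) set" where
  "SO41p = {M. transpose M ** Qform ** M = Qform \<and> det M = 1 \<and> M$5$5 > 0}"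

definition zeta :: "quat \<Rightarrow> real^5" where
  "zeta y = (let n = (qnorm y)\<^sup>2 in
     vector [2 * qre y / (1 - n), 2 * qi y / (1 - n), 2 * qj y / (1 - n), 2 * qk y / (1 - n),
             (1 + n) / (1 - n)])"

definition zeta_inv :: "real^5 \<Rightarrow> quat" where
  "zeta_inv x = Quat (x$1 / (1 + x$5)) (x$2 / (1 + x$5)) (x$3 / (1 + x$5)) (x$4 / (1 + x$5))"

definition eta :: "qmat \<Rightarrow> real^5^5" where
  "eta A = (THE M. M \<in> SO41p \<and> (\<forall>y\<in>B4. zeta (moebius A y) = M *v zeta y))"

definition is_subgroup_mat :: "('a::semiring_1^'n^'n) set \<Rightarrow> bool" where
  "is_subgroup_mat G \<longleftrightarrow> mat 1 \<in> G \<and> (\<forall>a\<in>G. \<forall>b\<in>G. a ** b \<in> G)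
      \<and> (\<forall>a\<in>G. invertible a \<and> matrix_inv a \<in> G)"

definition discrete_set :: "(real^5^5) set \<Rightarrow> bool" where
  "discrete_set G \<longleftrightarrow> (\<forall>a\<in>G. \<exists>e>0. \<forall>b\<in>G. b \<noteq> a \<longrightarrow> e \<le> dist a b)"

definition torsion_free :: "(real^5^5) set \<Rightarrow> bool" where
  "torsion_free G \<longleftrightarrow> (\<forall>a\<in>G. \<forall>n>0. ((\<lambda>m. a ** m) ^^ n) (mat 1) = mat 1 \<longrightarrow> a = mat 1)"

text \<open>M = Gamma\H^4 is closed (compact): there is a compact fundamental set.\<close>
definition cocompact :: "(real^5^5) set \<Rightarrow> bool" where
  "cocompact G \<longleftrightarrow> (\<exists>K. compact K \<and> K \<subseteq> H4 \<and> (\<forall>x\<in>H4. \<exists>a\<in>G. a *v x \<in> K))"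

definition orb :: "(real^5^5) set \<Rightarrow> real^5 \<Rightarrow> (real^5) set" where
  "orb G x = (\<lambda>a. a *v x) ` G"

text \<open>Gamma x is an isolated fixed point of f_star (quotient topology via the open projection).\<close>
definition isolated_fixed_point :: "(real^5^5) set \<Rightarrow> real^5^5 \<Rightarrow> real^5 \<Rightarrow> bool" where
  "isolated_fixed_point G f x \<longleftrightarrow> orb G (f *v x) = orb G x \<and>
     (\<exists>e>0. \<forall>y\<in>H4. dist y x < e \<and> orb G (f *v y) = orb G y \<longrightarrow> orb G y = orb G x)"

definition Spin4 :: "qmat set" where
  "Spin4 = {qmat p 0 0 q | p q. qnorm p = 1 \<and> qnorm q = 1}"

definition Psi1 :: "quat \<Rightarrow> complex^2^2" where
  "Psi1 h = (let a = Complex (qre h) (qi h); b = Complex (qj h) (qk h) in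
     vector [vector [a, b], vector [- cnj b, cnj a]])"

definition Delta_plus :: "qmat \<Rightarrow> complex^2^2" where "Delta_plus s = Psi1 (s$1$1)"
definition Delta_minus :: "qmat \<Rightarrow> complex^2^2" where "Delta_minus s = Psi1 (s$2$2)"

definition rcoset_q :: "qmat set \<Rightarrow> qmat \<Rightarrow> qmat set" where
  "rcoset_q G h = (\<lambda>a. a ** h) ` G"

text \<open>|det(I - d phi_P)|, computed in the chart y \<mapsto> Gamma (g zeta(y)) of M around P = Gamma g e5
  (the covering H^4 \<rightarrow> M is a local diffeomorphism); near y = 0 the local representative of
  phi = f_star is y \<mapsto> zeta^-1(g^-1 gamma f g zeta(y)), where gamma is the unique element of
  Gamma with gamma f x = x.\<close>
definition abs_det_I_minus_dphi :: "(real^5^5) set \<Rightarrow> real^5^5 \<Rightarrow> real^5^5 \<Rightarrow> real" where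
  "abs_det_I_minus_dphi G f g =
     (let x = g *v e5; c = (THE c. c \<in> G \<and> c *v (f *v x) = x);
          F = (\<lambda>v::real^4. q2v (zeta_inv (matrix_inv g *v (c *v (f *v (g *v zeta (v2q v)))))));
          D = frechet_derivative F (at 0)
      in \<bar>det (matrix (\<lambda>v. v - D v))\<bar>)"

text \<open>nu(hat phi, P) for phi = f_star, hat phi = hat f_star, P = Gamma g e5, with s the unique
  element of Spin(4) with hat Gamma hat f hat g = hat Gamma hat g s.\<close>
definition nu :: "qmat set \<Rightarrow> (real^5^5) set \<Rightarrow> real^5^5 \<Rightarrow> qmat \<Rightarrow> real^5^5 \<Rightarrow> qmat \<Rightarrow> complex" where
  "nu Gh G f fh g gh =
     (let s = (THE s. s \<in> Spin4 \<and> rcoset_q Gh (fh ** gh) = rcoset_q Gh (gh ** s)) in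
       (trace (Delta_plus s) - trace (Delta_minus s)) / complex_of_real (abs_det_I_minus_dphi G f g))"

end

theory Submission
  imports Defs
begin


definition qn :: "quat \<Rightarrow> real" where
  "qn a = (qre a)\<^sup>2 + (qi a)\<^sup>2 + (qj a)\<^sup>2 + (qk a)\<^sup>2"

definition qr :: "real \<Rightarrow> quat" where "qr r = Quat r 0 0 0"

lemma qcomp_simps [simp]:
  "qre (a * b) = qre a * qre b - qi a * qi b - qj a * qj b - qk a * qk b"
  "qi (a * b) = qre a * qi b + qi a * qre b + qj a * qk b - qk a * qj b"
  "qj (a * b) = qre a * qj b - qi a * qk b + qj a * qre b + qk a * qi b"
  "qk (a * b) = qre a * qk b + qi a * qj b - qj a * qi b + qk a * qre b"
  "qre (- a) = - qre a" "qi (- a) = - qi a" "qj (- a) = - qj a" "qk (- a) = - qk a"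
  "qre (a - b) = qre a - qre b" "qi (a - b) = qi a - qi b"
  "qj (a - b) = qj a - qj b" "qk (a - b) = qk a - qk b"
  "qre (qcnj a) = qre a" "qi (qcnj a) = - qi a" "qj (qcnj a) = - qj a" "qk (qcnj a) = - qk a"
  "qre (qr r) = r" "qi (qr r) = 0" "qj (qr r) = 0" "qk (qr r) = 0"
  "qre (inverse a) = qre a / qn a" "qi (inverse a) = - qi a / qn a"
  "qj (inverse a) = - qj a / qn a" "qk (inverse a) = - qk a / qn a"
  by (simp_all add: times_quat_def uminus_quat_def minus_quat_def qcnj_def qr_def inverse_quat_def qn_def Let_def)

lemma qn_nonneg: "qn a \<ge> 0" by (simp add: qn_def)

lemma qn_eq0: "qn a = 0 \<longleftrightarrow> a = 0"
proof
  assume "qn a = 0"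
  then have "qre a = 0 \<and> qi a = 0 \<and> qj a = 0 \<and> qk a = 0"
    unfolding qn_def by (simp add: add_nonneg_eq_0_iff)
  then show "a = 0" by (intro quat_eqI) auto
qed (simp add: qn_def)

instance quat :: division_ring
proof
  fix a b :: quat
  assume "a \<noteq> 0"
  then have n: "qn a \<noteq> 0" by (simp add: qn_eq0)
  show "inverse a * a = 1" "a * inverse a = 1"
    using n by (auto intro!: quat_eqI simp: field_simps) (simp_all add: qn_def power2_eq_square)
next
  fix a b :: quat
  show "a / b = a * inverse b" by (simp add: divide_quat_def)
  show "inverse (0::quat) = 0" by (simp add: inverse_quat_def zero_quat_def)
qed

lemma qeq_iff: "a = b \<longleftrightarrow> qre a = qre b \<and> qi a = qi b \<and> qj a = qj b \<and> qk a = qk b"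
  by (auto intro: quat_eqI)

lemma qr_0 [simp]: "qr 0 = 0" and qr_1 [simp]: "qr 1 = 1"
  by (simp_all add: qeq_iff)
lemma qr_mult: "qr r * qr s = qr (r * s)" by (simp add: qeq_iff)
lemma qr_add: "qr r + qr s = qr (r + s)" by (simp add: qeq_iff)
lemma qr_diff: "qr r - qr s = qr (r - s)" by (simp add: qeq_iff)
lemma qr_comm: "qr r * a = a * qr r" by (simp add: qeq_iff)
lemma qr_inj [simp]: "qr r = qr s \<longleftrightarrow> r = s" by (simp add: qeq_iff)
lemma qr_eq_1 [simp]: "qr r = 1 \<longleftrightarrow> r = 1" by (simp add: qeq_iff)
lemma qr_eq_0 [simp]: "qr r = 0 \<longleftrightarrow> r = 0" by (simp add: qeq_iff)
lemma qr_eq_m1: "qr r = - 1 \<longleftrightarrow> r = - 1" by (simp add: qeq_iff)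
lemma qr_neg: "qr (- r) = - qr r" by (simp add: qeq_iff)
lemma qcnj_mult: "qcnj (a * b) = qcnj b * qcnj a" by (simp add: qeq_iff algebra_simps)
lemma qcnj_add: "qcnj (a + b) = qcnj a + qcnj b" by (simp add: qeq_iff)
lemma qcnj_diff: "qcnj (a - b) = qcnj a - qcnj b" by (simp add: qeq_iff)
lemma qcnj_minus: "qcnj (- a) = - qcnj a" by (simp add: qeq_iff)
lemma qcnj_cnj [simp]: "qcnj (qcnj a) = a" by (simp add: qeq_iff)
lemma qcnj_qr [simp]: "qcnj (qr r) = qr r" by (simp add: qeq_iff)
lemma qcnj_0 [simp]: "qcnj 0 = 0" and qcnj_1 [simp]: "qcnj 1 = 1" by (simp_all add: qeq_iff)
lemma qcnj_eq0 [simp]: "qcnj a = 0 \<longleftrightarrow> a = 0" by (auto simp add: qeq_iff)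
lemma mult_cnj: "a * qcnj a = qr (qn a)" by (simp add: qeq_iff qn_def power2_eq_square algebra_simps)
lemma cnj_mult: "qcnj a * a = qr (qn a)" by (simp add: qeq_iff qn_def power2_eq_square algebra_simps)
lemma qn_mult: "qn (a * b) = qn a * qn b" by (simp add: qn_def power2_eq_square algebra_simps)
lemma qn_cnj [simp]: "qn (qcnj a) = qn a" by (simp add: qn_def)
lemma qn_qr [simp]: "qn (qr r) = r\<^sup>2" by (simp add: qn_def)
lemma qn_0 [simp]: "qn 0 = 0" and qn_1 [simp]: "qn 1 = 1" by (simp_all add: qn_def)
lemma qn_minus [simp]: "qn (- a) = qn a" by (simp add: qn_def)
lemma qn_add: "qn (a + b) = qn a + qn b + 2 * qre (a * qcnj b)"
  by (simp add: qn_def power2_eq_square algebra_simps)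
lemma qre_comm: "qre (a * b) = qre (b * a)" by simp
lemma qre_cnj_sym: "qre (a * qcnj b) = qre (b * qcnj a)" by simp
lemma qre_cnj [simp]: "qre (qcnj a) = qre a" by simp
lemma inverse_eq: "inverse a = qr (1 / qn a) * qcnj a" by (simp add: qeq_iff)
lemma qn_inverse: "qn (inverse a) = 1 / qn a"
proof (cases "a = 0")
  case False
  then have "qn a \<noteq> 0" by (simp add: qn_eq0)
  then show ?thesis by (simp add: inverse_eq qn_mult power2_eq_square)
qed simp
lemma qnorm_sq: "(qnorm a)\<^sup>2 = qn a" by (simp add: qnorm_def qn_def[symmetric] qn_nonneg)
lemma qnorm_qn: "qnorm a = sqrt (qn a)" by (simp add: qnorm_def qn_def)
lemma qnorm_1_iff: "qnorm a = 1 \<longleftrightarrow> qn a = 1" by (simp add: qnorm_qn)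
lemma qnorm_lt1_iff: "qnorm a < 1 \<longleftrightarrow> qn a < 1" by (simp add: qnorm_qn)
lemma unit_inverse: "qn q = 1 \<Longrightarrow> inverse q = qcnj q" by (simp add: inverse_eq)
lemma qn_pos: "a \<noteq> 0 \<Longrightarrow> qn a > 0" using qn_nonneg[of a] qn_eq0[of a] by linarith

section \<open>2x2 quaternion matrices\<close>

lemma qmat_nth [simp]:
  "qmat a b c d $ 1 $ 1 = a" "qmat a b c d $ 1 $ 2 = b"
  "qmat a b c d $ 2 $ 1 = c" "qmat a b c d $ 2 $ 2 = d"
  by (simp_all add: qmat_def)

lemma qmat_eta: "A = qmat (A$1$1) (A$1$2) (A$2$1) (A$2$2)"
  by (simp add: vec_eq_iff forall_2)

lemma qmat_eq_iff: "qmat a b c d = qmat a' b' c' d' \<longleftrightarrow> a = a' \<and> b = b' \<and> c = c' \<and> d = d'"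
  by (auto simp: vec_eq_iff forall_2)

lemma qmat_mult: "qmat a b c d ** qmat a' b' c' d' =
   qmat (a*a'+b*c') (a*b'+b*d') (c*a'+d*c') (c*b'+d*d')"
  by (simp add: vec_eq_iff forall_2 matrix_matrix_mult_def sum_2)

lemma qmat_one: "(mat 1 :: qmat) = qmat 1 0 0 1"
  by (simp add: vec_eq_iff forall_2 mat_def)

lemma qadj_qmat: "qadj (qmat a b c d) = qmat (qcnj a) (qcnj c) (qcnj b) (qcnj d)"
  by (simp add: vec_eq_iff forall_2 qadj_def)

definition su :: "quat \<Rightarrow> quat \<Rightarrow> quat \<Rightarrow> quat \<Rightarrow> bool" where
  "su a b c d \<longleftrightarrow> qn a - qn c = 1 \<and> qn d - qn b = 1 \<and> qcnj a * b = qcnj c * d"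

lemma SU11H_iff: "qmat a b c d \<in> SU11H \<longleftrightarrow> su a b c d"
proof -
  have "qmat a b c d \<in> SU11H \<longleftrightarrow>
     qmat (qcnj a * a - qcnj c * c) (qcnj a * b - qcnj c * d) (qcnj b * a - qcnj d * c) (qcnj b * b - qcnj d * d)
       = qmat 1 0 0 (-1)"
    by (simp add: SU11H_def qadj_qmat Jq_def qmat_mult)
  also have "\<dots> \<longleftrightarrow> su a b c d"
  proof -
    have e: "qcnj b * a - qcnj d * c = qcnj (qcnj a * b - qcnj c * d)"
      by (simp add: qcnj_diff qcnj_mult)
    show ?thesis
      unfolding qmat_eq_iff e cnj_mult qr_diff su_def
      by (auto simp: qr_eq_m1)
  qed
  finally show ?thesis .
qed

lemma SU11H_iff': "A \<in> SU11H \<longleftrightarrow> su (A$1$1) (A$1$2) (A$2$1) (A$2$2)"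
  by (subst qmat_eta) (rule SU11H_iff)

lemma su_facts:
  assumes "su a b c d"
  shows "a \<noteq> 0" "d \<noteq> 0" "qn a = qn d" "qn b = qn c" "a * qcnj c = b * qcnj d"
    "qcnj b * a = qcnj d * c" "qn a - qn b = 1" "qn d - qn c = 1" "qn a \<ge> 1" "qn d \<ge> 1"
proof -
  have 1: "qn a - qn c = 1" and 2: "qn d - qn b = 1" and 3: "qcnj a * b = qcnj c * d"
    using assms by (auto simp: su_def)
  have ga: "qn a \<ge> 1" using 1 qn_nonneg[of c] by linarith
  have gd: "qn d \<ge> 1" using 2 qn_nonneg[of b] by linarith
  then show "a \<noteq> 0" "d \<noteq> 0" "qn a \<ge> 1" "qn d \<ge> 1" using ga by auto
  have "qn (qcnj a * b) = qn (qcnj c * d)" using 3 by simp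
  then have "qn a * qn b = qn c * qn d" by (simp add: qn_mult)
  then have "(1 + qn c) * qn b = qn c * (1 + qn b)"
    using 1 2 by (smt (verit))
  then show bc: "qn b = qn c" by (simp add: algebra_simps)
  then show ad: "qn a = qn d" using 1 2 by linarith
  show "qn a - qn b = 1" "qn d - qn c = 1" using 1 2 bc by linarith+
  show "qcnj b * a = qcnj d * c"
    using arg_cong[OF 3, of qcnj] by (simp add: qcnj_mult)
  have "qr (qn a) * (b * qcnj d) = a * qcnj a * b * qcnj d" by (simp add: mult_cnj mult.assoc)
  also have "\<dots> = a * qcnj c * (d * qcnj d)" using 3 by (simp add: mult.assoc)
  also have "\<dots> = qr (qn a) * (a * qcnj c)" using ad by (simp add: mult_cnj qr_comm)
  finally have "qr (qn a) * (b * qcnj d) = qr (qn a) * (a * qcnj c)" .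
  moreover have "qr (qn a) \<noteq> 0" using ga by simp
  ultimately show "a * qcnj c = b * qcnj d" by simp
qed

lemma su_Jpres:
  assumes "su a b c d"
  shows "qn (a * y + b) - qn (c * y + d) = qn y - 1"
proof -
  note f = su_facts[OF assms]
  have "qre (a * y * qcnj b) = qre (qcnj b * a * y)" by (metis qre_comm mult.assoc)
  also have "\<dots> = qre (qcnj d * c * y)" using f(6) by simp
  also have "\<dots> = qre (c * y * qcnj d)" by (metis qre_comm mult.assoc)
  finally have r: "qre (a * y * qcnj b) = qre (c * y * qcnj d)" .
  show ?thesis
    unfolding qn_add qn_mult r using f(3,4) assms unfolding su_def by (simp add: algebra_simps)
qed

lemma su_denom:
  assumes "su a b c d" "qn y < 1"
  shows "c * y + d \<noteq> 0" "qn (a * y + b) < qn (c * y + d)"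
    "qn ((a * y + b) * inverse (c * y + d)) < 1"
proof -
  have j: "qn (a * y + b) - qn (c * y + d) = qn y - 1" by (rule su_Jpres[OF assms(1)])
  show lt: "qn (a * y + b) < qn (c * y + d)" using j assms(2) by linarith
  then show nz: "c * y + d \<noteq> 0" using qn_nonneg[of "a*y+b"] by auto
  have "qn ((a * y + b) * inverse (c * y + d)) = qn (a * y + b) / qn (c * y + d)"
    by (simp add: qn_mult qn_inverse)
  then show "qn ((a * y + b) * inverse (c * y + d)) < 1"
    using lt qn_pos[OF nz] by simp
qed

lemma qadj_mult: "qadj (A ** B) = qadj B ** qadj A"
  apply (subst (1 2) qmat_eta[of A], subst (1 2) qmat_eta[of B])
  by (simp add: qmat_mult qadj_qmat qcnj_add qcnj_mult)

lemma SU_mult: "A \<in> SU11H \<Longrightarrow> B \<in> SU11H \<Longrightarrow> A ** B \<in> SU11H"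
  unfolding SU11H_def
  by (simp add: qadj_mult matrix_mul_assoc)
     (metis matrix_mul_assoc)

definition qinv :: "qmat \<Rightarrow> qmat" where
  "qinv A = qmat (qcnj (A$1$1)) (- qcnj (A$2$1)) (- qcnj (A$1$2)) (qcnj (A$2$2))"

lemma inv_unique_gen:
  fixes A B :: "'a::semiring_1^'n^'n"
  assumes "A ** B = mat 1" "B ** A = mat 1"
  shows "matrix_inv A = B"
proof -
  have ex: "\<exists>X. A ** X = mat 1 \<and> X ** A = mat 1" using assms by blast
  define X where "X = matrix_inv A"
  have X: "A ** X = mat 1" "X ** A = mat 1"
    using someI_ex[OF ex] unfolding X_def matrix_inv_def by auto
  have "X = X ** (A ** B)" using assms by simp
  also have "\<dots> = B" by (simp add: matrix_mul_assoc X)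
  finally show ?thesis unfolding X_def .
qed

lemma invertible_inv:
  fixes A :: "'a::semiring_1^'n^'n"
  assumes "invertible A"
  shows "A ** matrix_inv A = mat 1" "matrix_inv A ** A = mat 1"
proof -
  have ex: "\<exists>X. A ** X = mat 1 \<and> X ** A = mat 1" using assms unfolding invertible_def by blast
  show "A ** matrix_inv A = mat 1" "matrix_inv A ** A = mat 1"
    using someI_ex[OF ex] unfolding matrix_inv_def by auto
qed

lemma SU_inv:
  assumes "A \<in> SU11H"
  shows "qinv A ** A = mat 1" "A ** qinv A = mat 1" "matrix_inv A = qinv A"
    "qinv A \<in> SU11H" "matrix_inv A \<in> SU11H" "invertible A"
proof -
  obtain a b c d where A: "A = qmat a b c d" by (metis qmat_eta)
  have s: "su a b c d" using assms A SU11H_iff by simp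
  note f = su_facts[OF s]
  have q: "qinv A = qmat (qcnj a) (- qcnj c) (- qcnj b) (qcnj d)" by (simp add: qinv_def A)
  have f10: "c * qcnj a = d * qcnj b" using arg_cong[OF f(5), of qcnj] by (simp add: qcnj_mult)
  have e1: "qcnj a * a + - qcnj c * c = 1" "qcnj a * b + - qcnj c * d = 0"
    "- qcnj b * a + qcnj d * c = 0" "- qcnj b * b + qcnj d * d = 1"
    using f s unfolding su_def
    by (simp_all add: cnj_mult qr_add[symmetric] qr_neg[symmetric] del: qr_add) (simp_all add: qr_add)
  show 1: "qinv A ** A = mat 1" unfolding q unfolding A qmat_mult qmat_one qmat_eq_iff
    using e1 by simp
  have e2: "a * qcnj a + b * - qcnj b = 1" "a * - qcnj c + b * qcnj d = 0"
    "c * qcnj a + d * - qcnj b = 0" "c * - qcnj c + d * qcnj d = 1"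
    using f f10
    by (simp_all add: mult_cnj qr_add[symmetric] qr_neg[symmetric] del: qr_add) (simp_all add: qr_add)
  show 2: "A ** qinv A = mat 1" unfolding q unfolding A qmat_mult qmat_one qmat_eq_iff
    using e2 by simp
  show 3: "matrix_inv A = qinv A" by (rule inv_unique_gen[OF 2 1])
  show 4: "qinv A \<in> SU11H" unfolding q SU11H_iff su_def using f
    by (simp add: qcnj_minus)
  show "matrix_inv A \<in> SU11H" using 3 4 by simp
  show "invertible A" unfolding invertible_def using 1 2 by blast
qed

lemma moebius_qmat: "moebius (qmat a b c d) y = (a * y + b) * inverse (c * y + d)"
  by (simp add: moebius_def)

lemma B4_iff: "y \<in> B4 \<longleftrightarrow> qn y < 1" by (simp add: B4_def qnorm_lt1_iff)

lemma moebius_B4: "A \<in> SU11H \<Longrightarrow> qn y < 1 \<Longrightarrow> qn (moebius A y) < 1"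
  unfolding moebius_def SU11H_iff' by (rule su_denom(3))

lemma moebius_one: "moebius (mat 1) y = y"
  by (simp add: qmat_one moebius_qmat)

lemma moebius_mult:
  assumes "A \<in> SU11H" "B \<in> SU11H" "qn y < 1"
  shows "moebius (A ** B) y = moebius A (moebius B y)"
proof -
  obtain a b c d where A: "A = qmat a b c d" by (metis qmat_eta)
  obtain a' b' c' d' where B: "B = qmat a' b' c' d'" by (metis qmat_eta)
  have sB: "su a' b' c' d'" using assms B SU11H_iff by simp
  define u where "u = a' * y + b'"
  define w where "w = c' * y + d'"
  have w0: "w \<noteq> 0" unfolding w_def by (rule su_denom(1)[OF sB assms(3)])
  have l: "moebius (A ** B) y = (a * u + b * w) * inverse (c * u + d * w)"
    by (simp add: A B qmat_mult moebius_qmat u_def w_def algebra_simps)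
  have "moebius A (moebius B y) = (a * (u * inverse w) + b) * inverse (c * (u * inverse w) + d)"
    by (simp add: A B moebius_qmat u_def w_def)
  also have "a * (u * inverse w) + b = (a * u + b * w) * inverse w"
    using w0 by (simp add: algebra_simps mult.assoc)
  also have "c * (u * inverse w) + d = (c * u + d * w) * inverse w"
    using w0 by (simp add: algebra_simps mult.assoc)
  also have "(a * u + b * w) * inverse w * inverse ((c * u + d * w) * inverse w)
      = (a * u + b * w) * inverse (c * u + d * w)"
  proof (cases "c * u + d * w = 0")
    case True then show ?thesis by simp
  next
    case False
    have "inverse ((c * u + d * w) * inverse w) = w * inverse (c * u + d * w)"
      using w0 False by (simp add: nonzero_inverse_mult_distrib)
    then show ?thesis using w0
      by (metis mult.assoc left_inverse mult_1_left)
  qed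
  finally show ?thesis using l by simp
qed

section \<open>Vectors in R^4, R^5\<close>

lemma exhaust_5:
  fixes x :: 5
  shows "x = 1 \<or> x = 2 \<or> x = 3 \<or> x = 4 \<or> x = 5"
proof (induct x)
  case (of_int z)
  then have "z = 0 \<or> z = 1 \<or> z = 2 \<or> z = 3 \<or> z = 4" by fastforce
  then show ?case by auto
qed

lemma forall_5: "(\<forall>i::5. P i) \<longleftrightarrow> P 1 \<and> P 2 \<and> P 3 \<and> P 4 \<and> P 5"
  by (metis exhaust_5)

lemma UNIV_5: "UNIV = {1, 2, 3, 4, 5::5}"
  using exhaust_5 by auto

lemma sum_5: "sum f (UNIV::5 set) = f 1 + f 2 + f 3 + f 4 + f 5"
  unfolding UNIV_5 by (simp add: ac_simps)

lemma vector_4 [simp]: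
 "(vector [x1,x2,x3,x4] ::('a::zero)^4)$1 = x1"
 "(vector [x1,x2,x3,x4] ::('a::zero)^4)$2 = x2"
 "(vector [x1,x2,x3,x4] ::('a::zero)^4)$3 = x3"
 "(vector [x1,x2,x3,x4] ::('a::zero)^4)$4 = x4"
  unfolding vector_def by simp_all

lemma vector_5 [simp]:
 "(vector [x1,x2,x3,x4,x5] ::('a::zero)^5)$1 = x1"
 "(vector [x1,x2,x3,x4,x5] ::('a::zero)^5)$2 = x2"
 "(vector [x1,x2,x3,x4,x5] ::('a::zero)^5)$3 = x3"
 "(vector [x1,x2,x3,x4,x5] ::('a::zero)^5)$4 = x4"
 "(vector [x1,x2,x3,x4,x5] ::('a::zero)^5)$5 = x5"
  unfolding vector_def by simp_all

definition xq :: "real^5 \<Rightarrow> quat" where "xq x = Quat (x$1) (x$2) (x$3) (x$4)"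
definition vq :: "quat \<Rightarrow> real \<Rightarrow> real^5" where
  "vq q s = vector [qre q, qi q, qj q, qk q, s]"

lemma xq_comp [simp]: "qre (xq x) = x$1" "qi (xq x) = x$2" "qj (xq x) = x$3" "qk (xq x) = x$4"
  by (simp_all add: xq_def)

lemma vq_comp [simp]: "vq q s $ 1 = qre q" "vq q s $ 2 = qi q" "vq q s $ 3 = qj q"
  "vq q s $ 4 = qk q" "vq q s $ 5 = s"
  by (simp_all add: vq_def)

lemma xq_vq [simp]: "xq (vq q s) = q" by (simp add: qeq_iff)

lemma vq_eq_iff: "vq q s = vq q' s' \<longleftrightarrow> q = q' \<and> s = s'"
  by (auto simp: vec_eq_iff forall_5 qeq_iff)

lemma vq_xq: "vq (xq x) (x$5) = x" by (simp add: vec_eq_iff forall_5)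

lemma zeta_vq: "zeta y = vq (qr (2 / (1 - qn y)) * y) ((1 + qn y) / (1 - qn y))"
  by (simp add: vec_eq_iff forall_5 zeta_def Let_def qnorm_sq)

lemma zeta_0: "zeta 0 = e5"
  by (simp add: vec_eq_iff forall_5 zeta_def e5_def axis_def qnorm_def)

lemma zeta_inv_zeta: "qn y < 1 \<Longrightarrow> zeta_inv (zeta y) = y"
  by (simp add: zeta_vq zeta_inv_def qeq_iff field_simps)

lemma zeta_inj: "qn y < 1 \<Longrightarrow> qn y' < 1 \<Longrightarrow> zeta y = zeta y' \<Longrightarrow> y = y'"
  by (metis zeta_inv_zeta)

section \<open>The explicit double cover\<close>

definition Ephi :: "qmat \<Rightarrow> real^5 \<Rightarrow> real^5" where
  "Ephi A x = (let a = A$1$1; b = A$1$2; c = A$2$1; d = A$2$2 in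
     vq (qr (x$5) * (a * qcnj c + b * qcnj d) + a * xq x * qcnj d + b * qcnj (xq x) * qcnj c)
        (x$5 * (qn a + qn b) + 2 * qre (a * xq x * qcnj b)))"

lemma linear_Ephi: "linear (Ephi A)"
  by (rule linearI) (simp_all add: vec_eq_iff forall_5 Ephi_def Let_def algebra_simps)

definition E :: "qmat \<Rightarrow> real^5^5" where "E A = matrix (Ephi A)"

lemma E_mult_vec: "E A *v x = Ephi A x"
  by (simp add: E_def matrix_works linear_Ephi)



lemma su_re: "su a b c d \<Longrightarrow> qre (a * y * qcnj b) = qre (c * y * qcnj d)"
proof -
  assume s: "su a b c d"
  have "qre (a * y * qcnj b) = qre (qcnj b * a * y)" by (metis qre_comm mult.assoc)
  also have "\<dots> = qre (qcnj d * c * y)" using su_facts(6)[OF s] by simp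
  also have "\<dots> = qre (c * y * qcnj d)" by (metis qre_comm mult.assoc)
  finally show ?thesis .
qed

lemma E_action:
  assumes A: "A \<in> SU11H" and y: "qn y < 1"
  shows "E A *v zeta y = zeta (moebius A y)"
proof -
  obtain a b c d where Aq: "A = qmat a b c d" by (metis qmat_eta)
  have s: "su a b c d" using A Aq SU11H_iff by simp
  note f = su_facts[OF s]
  define n where "n = qn y"
  define k where "k = 1 / (1 - n)"
  define u where "u = a * y + b"
  define w where "w = c * y + d"
  define z where "z = u * inverse w"
  have n1: "n < 1" using y n_def by simp
  have zy: "zeta y = vq (qr (2 * k) * y) ((1 + n) * k)"
    by (simp add: zeta_vq k_def n_def)
  have w0: "w \<noteq> 0" unfolding w_def by (rule su_denom(1)[OF s y])
  have wp: "qn w > 0" using qn_pos[OF w0] .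
  have Jp: "qn u - qn w = n - 1" unfolding u_def w_def n_def by (rule su_Jpres[OF s])
  have qz: "qn z = qn u / qn w" by (simp add: z_def qn_mult qn_inverse)
  have omz: "1 - qn z = (1 - n) / qn w" using qz Jp wp by (simp add: field_simps)
  have mz: "moebius A y = z" by (simp add: Aq moebius_qmat z_def u_def w_def)
  have zw: "z * qr (qn w) = u * qcnj w"
  proof -
    have "z * qr (qn w) = u * (inverse w * w) * qcnj w"
      unfolding z_def mult_cnj[symmetric] by (simp only: mult.assoc)
    then show ?thesis using w0 by simp
  qed
  have P: "b * qcnj d = a * qcnj c" using f(5) by simp
  define R where "R = a * y * qcnj d + b * qcnj y * qcnj c"
  have lhs_q: "xq (E A *v zeta y) = qr ((1 + n) * k) * (a * qcnj c + b * qcnj d) + qr (2 * k) * R"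
    unfolding E_mult_vec Ephi_def Aq zy R_def
    by (simp add: qeq_iff algebra_simps)
  have e: "u * qcnj w = qr n * (a * qcnj c) + R + b * qcnj d"
    unfolding u_def w_def R_def n_def
    by (simp add: qeq_iff qn_def algebra_simps power2_eq_square)
  have "2 / (1 - qn z) = 2 * k * qn w" unfolding omz using wp n1 by (simp add: k_def field_simps)
  then have "xq (zeta z) = qr (2 * k) * (z * qr (qn w))"
    by (simp add: zeta_vq qeq_iff)
  then have rhs_q: "xq (zeta z) = qr (2 * k) * (qr n * (a * qcnj c) + R + b * qcnj d)"
    using zw e by simp
  have q_eq: "xq (E A *v zeta y) = xq (zeta z)"
    unfolding lhs_q rhs_q P by (simp add: qeq_iff algebra_simps)
  have re: "qre (a * y * qcnj b) = qre (c * y * qcnj d)" by (rule su_re[OF s])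
  have lhs5: "(E A *v zeta y) $ 5 = (1 + n) * k * (qn a + qn b) + 4 * k * qre (a * y * qcnj b)"
  proof -
    have "qre (a * (qr (2 * k) * y) * qcnj b) = 2 * k * qre (a * y * qcnj b)"
      by (simp add: algebra_simps)
    then show ?thesis
      unfolding E_mult_vec Ephi_def Aq zy by simp
  qed
  have qu: "qn u = qn a * n + qn b + 2 * qre (a * y * qcnj b)"
    by (simp add: u_def qn_add qn_mult n_def)
  have qw: "qn w = qn b * n + qn a + 2 * qre (a * y * qcnj b)"
    using f(3,4) re by (simp add: w_def qn_add qn_mult n_def)
  have rhs5: "zeta z $ 5 = k * (qn w + qn u)"
  proof -
    have wu: "qn w - qn u > 0" using Jp n1 by linarith
    have "(1 + qn z) / (1 - qn z) = (qn w + qn u) / (qn w - qn u)"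
      unfolding qz using wp wu by (simp add: field_simps)
    also have "\<dots> = k * (qn w + qn u)" using Jp n1 by (simp add: k_def field_simps)
    finally show ?thesis by (simp add: zeta_vq)
  qed
  have r_eq: "(E A *v zeta y) $ 5 = zeta z $ 5"
    unfolding lhs5 rhs5 qu qw by (simp add: algebra_simps)
  have "E A *v zeta y = vq (xq (E A *v zeta y)) ((E A *v zeta y) $ 5)" by (simp add: vq_xq)
  also have "\<dots> = vq (xq (zeta z)) (zeta z $ 5)" using q_eq r_eq by simp
  also have "\<dots> = zeta z" by (simp add: vq_xq)
  finally show ?thesis using mz by simp
qed


definition qf :: "real^5 \<Rightarrow> real" where
  "qf v = (v$1)\<^sup>2 + (v$2)\<^sup>2 + (v$3)\<^sup>2 + (v$4)\<^sup>2 - (v$5)\<^sup>2"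
lemma qf_zeta: "qn y < 1 \<Longrightarrow> qf (zeta y) = -1"
proof -
  assume y: "qn y < 1"
  define n where "n = qn y"
  define k where "k = 1 / (1 - n)"
  have k1: "k * (1 - n) = 1" using y n_def k_def by simp
  have zy: "zeta y = vq (qr (2 * k) * y) ((1 + n) * k)"
    by (simp add: zeta_vq k_def n_def)
  have "qf (zeta y) = 4 * k\<^sup>2 * n - (1 + n)\<^sup>2 * k\<^sup>2"
    unfolding zy qf_def n_def qn_def by (simp add: power2_eq_square algebra_simps)
  also have "\<dots> = - ((k * (1 - n))\<^sup>2)" by (simp add: power2_eq_square algebra_simps)
  also have "\<dots> = -1" using k1 by simp
  finally show ?thesis .
qed

lemma Qform_mult: "Qform *v v = (\<chi> i. if i = 5 then - v$i else v$i)"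
  by (simp add: vec_eq_iff forall_5 matrix_vector_mult_def Qform_def sum_5)



lemma col_entry: "(M *v axis j 1) $ i = (M :: real^'n^'m) $ i $ j"
  by (simp add: matrix_vector_mult_basis column_def)

lemma E_unique:
  fixes M N :: "real^5^5"
  assumes h: "\<And>y. qn y < 1 \<Longrightarrow> M *v zeta y = N *v zeta y"
  shows "M = N"
proof -
  have e5: "M *v axis 5 1 = N *v axis 5 1" using h[of 0] by (simp add: zeta_0 e5_def)
  have z1: "zeta (Quat (1/2) 0 0 0) = (4/3) *\<^sub>R axis 1 1 + (5/3) *\<^sub>R axis 5 1"
    by (simp add: vec_eq_iff forall_5 zeta_vq qn_def axis_def power2_eq_square)
  have z2: "zeta (Quat 0 (1/2) 0 0) = (4/3) *\<^sub>R axis 2 1 + (5/3) *\<^sub>R axis 5 1"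
    by (simp add: vec_eq_iff forall_5 zeta_vq qn_def axis_def power2_eq_square)
  have z3: "zeta (Quat 0 0 (1/2) 0) = (4/3) *\<^sub>R axis 3 1 + (5/3) *\<^sub>R axis 5 1"
    by (simp add: vec_eq_iff forall_5 zeta_vq qn_def axis_def power2_eq_square)
  have z4: "zeta (Quat 0 0 0 (1/2)) = (4/3) *\<^sub>R axis 4 1 + (5/3) *\<^sub>R axis 5 1"
    by (simp add: vec_eq_iff forall_5 zeta_vq qn_def axis_def power2_eq_square)
  have gen: "M *v axis i 1 = N *v axis i 1"
    if "zeta y = (4/3) *\<^sub>R axis i 1 + (5/3) *\<^sub>R axis 5 1" "qn y < 1" for y i
  proof -
    have "M *v ((4/3) *\<^sub>R axis i 1 + (5/3) *\<^sub>R axis 5 1) = N *v ((4/3) *\<^sub>R axis i 1 + (5/3) *\<^sub>R axis 5 1)"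
      using h[OF that(2)] that(1) by simp
    then have "(4/3) *\<^sub>R (M *v axis i 1) = (4/3) *\<^sub>R (N *v axis i 1)"
      using e5 by (simp add: matrix_vector_right_distrib matrix_vector_mult_scaleR)
    then show ?thesis by simp
  qed
  have qn_half: "qn (Quat (1/2) 0 0 0) < 1" "qn (Quat 0 (1/2) 0 0) < 1"
     "qn (Quat 0 0 (1/2) 0) < 1" "qn (Quat 0 0 0 (1/2)) < 1" by (simp_all add: qn_def power2_eq_square)
  have "\<forall>j. M *v axis j 1 = N *v axis j 1"
    unfolding forall_5 using gen[OF z1 qn_half(1)] gen[OF z2 qn_half(2)] gen[OF z3 qn_half(3)]
      gen[OF z4 qn_half(4)] e5 by simp
  then show ?thesis by (metis vec_eq_iff col_entry)
qed

lemma E_mult: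
  assumes "A \<in> SU11H" "B \<in> SU11H"
  shows "E (A ** B) = E A ** E B"
proof (rule E_unique)
  fix y :: quat assume y: "qn y < 1"
  have "E (A ** B) *v zeta y = zeta (moebius A (moebius B y))"
    using E_action[OF SU_mult[OF assms] y] moebius_mult[OF assms y] by simp
  also have "\<dots> = E A *v (E B *v zeta y)"
    using E_action[OF assms(1) moebius_B4[OF assms(2) y]] E_action[OF assms(2) y] by simp
  finally show "E (A ** B) *v zeta y = (E A ** E B) *v zeta y" by (simp add: matrix_vector_mul_assoc)
qed

lemma one_SU: "mat 1 \<in> SU11H"
  by (simp add: qmat_one SU11H_iff su_def)

lemma E_one: "E (mat 1) = mat 1"
  by (rule E_unique) (simp add: E_action[OF one_SU] moebius_one)



lemma B_axis: "axis i 1 \<bullet> ((S::real^'n^'n) *v axis j 1) = S$i$j"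
  by (subst inner_commute) (simp add: cart_eq_inner_axis[symmetric] col_entry)

lemma B_lin2: "((a::real) *\<^sub>R u + b *\<^sub>R v) \<bullet> ((S::real^'n^'n) *v (a *\<^sub>R u + b *\<^sub>R v)) =
   a\<^sup>2 * (u \<bullet> (S *v u)) + a * b * (u \<bullet> (S *v v) + v \<bullet> (S *v u)) + b\<^sup>2 * (v \<bullet> (S *v v))"
  by (simp add: matrix_vector_right_distrib matrix_vector_mult_scaleR inner_add_left inner_add_right
      algebra_simps power2_eq_square)

lemma polar:
  fixes S :: "real^5^5"
  assumes sym: "transpose S = S" and h: "\<And>y. qn y < 1 \<Longrightarrow> zeta y \<bullet> (S *v zeta y) = 0"
  shows "S = 0"
proof -
  have s: "\<And>i j. S$i$j = S$j$i" using sym by (simp add: transpose_def vec_eq_iff)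
  have e0: "S$5$5 = 0" using h[of 0] by (simp add: zeta_0 e5_def B_axis)
  have diag: "S$i$i = 0 \<and> S$i$5 = 0"
    if "zeta y = (4/3) *\<^sub>R axis i 1 + (5/3) *\<^sub>R axis 5 1"
       "zeta y' = (-4/3) *\<^sub>R axis i 1 + (5/3) *\<^sub>R axis 5 1" "qn y < 1" "qn y' < 1" for i y y'
  proof -
    have 1: "(4/3)\<^sup>2 * S$i$i + (4/3) * (5/3) * (S$i$5 + S$5$i) = 0"
      using h[OF that(3)] unfolding that(1) B_lin2 B_axis e0 by simp
    have 2: "(4/3)\<^sup>2 * S$i$i - (4/3) * (5/3) * (S$i$5 + S$5$i) = 0"
      using h[OF that(4)] unfolding that(2) B_lin2 B_axis e0 by (simp add: power2_eq_square)
    show ?thesis using 1 2 s[of 5 i] by (simp add: power2_eq_square)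
  qed
  have off: "S$i$j = 0"
    if "zeta y = 2 *\<^sub>R (axis i 1 + axis j 1) + 3 *\<^sub>R axis 5 1" "qn y < 1"
       "S$i$i = 0" "S$j$j = 0" "S$i$5 = 0" "S$j$5 = 0" for i j y
  proof -
    have "4 * (S$i$j + S$j$i) = 0"
      using h[OF that(2)] unfolding that(1) B_lin2 using that(3-6) s[of 5 i] s[of 5 j] e0
      by (simp add: matrix_vector_right_distrib inner_add_left inner_add_right B_axis power2_eq_square)
    then show ?thesis using s[of i j] by simp
  qed
  have zp1: "zeta (Quat (1/2) (0) (0) (0)) = (4/3) *\<^sub>R axis 1 1 + (5/3) *\<^sub>R axis 5 1" "qn (Quat (1/2) (0) (0) (0)) < 1"
    by (simp_all add: vec_eq_iff forall_5 zeta_vq qn_def axis_def power2_eq_square)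
  have zm1: "zeta (Quat (-1/2) (0) (0) (0)) = (-4/3) *\<^sub>R axis 1 1 + (5/3) *\<^sub>R axis 5 1" "qn (Quat (-1/2) (0) (0) (0)) < 1"
    by (simp_all add: vec_eq_iff forall_5 zeta_vq qn_def axis_def power2_eq_square)
  note d1 = diag[OF zp1(1) zm1(1) zp1(2) zm1(2)]
  have zp2: "zeta (Quat (0) (1/2) (0) (0)) = (4/3) *\<^sub>R axis 2 1 + (5/3) *\<^sub>R axis 5 1" "qn (Quat (0) (1/2) (0) (0)) < 1"
    by (simp_all add: vec_eq_iff forall_5 zeta_vq qn_def axis_def power2_eq_square)
  have zm2: "zeta (Quat (0) (-1/2) (0) (0)) = (-4/3) *\<^sub>R axis 2 1 + (5/3) *\<^sub>R axis 5 1" "qn (Quat (0) (-1/2) (0) (0)) < 1"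
    by (simp_all add: vec_eq_iff forall_5 zeta_vq qn_def axis_def power2_eq_square)
  note d2 = diag[OF zp2(1) zm2(1) zp2(2) zm2(2)]
  have zp3: "zeta (Quat (0) (0) (1/2) (0)) = (4/3) *\<^sub>R axis 3 1 + (5/3) *\<^sub>R axis 5 1" "qn (Quat (0) (0) (1/2) (0)) < 1"
    by (simp_all add: vec_eq_iff forall_5 zeta_vq qn_def axis_def power2_eq_square)
  have zm3: "zeta (Quat (0) (0) (-1/2) (0)) = (-4/3) *\<^sub>R axis 3 1 + (5/3) *\<^sub>R axis 5 1" "qn (Quat (0) (0) (-1/2) (0)) < 1"
    by (simp_all add: vec_eq_iff forall_5 zeta_vq qn_def axis_def power2_eq_square)
  note d3 = diag[OF zp3(1) zm3(1) zp3(2) zm3(2)]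
  have zp4: "zeta (Quat (0) (0) (0) (1/2)) = (4/3) *\<^sub>R axis 4 1 + (5/3) *\<^sub>R axis 5 1" "qn (Quat (0) (0) (0) (1/2)) < 1"
    by (simp_all add: vec_eq_iff forall_5 zeta_vq qn_def axis_def power2_eq_square)
  have zm4: "zeta (Quat (0) (0) (0) (-1/2)) = (-4/3) *\<^sub>R axis 4 1 + (5/3) *\<^sub>R axis 5 1" "qn (Quat (0) (0) (0) (-1/2)) < 1"
    by (simp_all add: vec_eq_iff forall_5 zeta_vq qn_def axis_def power2_eq_square)
  note d4 = diag[OF zp4(1) zm4(1) zp4(2) zm4(2)]
  have w12: "zeta (Quat (1/2) (1/2) (0) (0)) = 2 *\<^sub>R (axis 1 1 + axis 2 1) + 3 *\<^sub>R axis 5 1" "qn (Quat (1/2) (1/2) (0) (0)) < 1"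
    by (simp_all add: vec_eq_iff forall_5 zeta_vq qn_def axis_def power2_eq_square)
  note o12 = off[OF w12 d1[THEN conjunct1] d2[THEN conjunct1] d1[THEN conjunct2] d2[THEN conjunct2]]
  have w13: "zeta (Quat (1/2) (0) (1/2) (0)) = 2 *\<^sub>R (axis 1 1 + axis 3 1) + 3 *\<^sub>R axis 5 1" "qn (Quat (1/2) (0) (1/2) (0)) < 1"
    by (simp_all add: vec_eq_iff forall_5 zeta_vq qn_def axis_def power2_eq_square)
  note o13 = off[OF w13 d1[THEN conjunct1] d3[THEN conjunct1] d1[THEN conjunct2] d3[THEN conjunct2]]
  have w14: "zeta (Quat (1/2) (0) (0) (1/2)) = 2 *\<^sub>R (axis 1 1 + axis 4 1) + 3 *\<^sub>R axis 5 1" "qn (Quat (1/2) (0) (0) (1/2)) < 1"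
    by (simp_all add: vec_eq_iff forall_5 zeta_vq qn_def axis_def power2_eq_square)
  note o14 = off[OF w14 d1[THEN conjunct1] d4[THEN conjunct1] d1[THEN conjunct2] d4[THEN conjunct2]]
  have w23: "zeta (Quat (0) (1/2) (1/2) (0)) = 2 *\<^sub>R (axis 2 1 + axis 3 1) + 3 *\<^sub>R axis 5 1" "qn (Quat (0) (1/2) (1/2) (0)) < 1"
    by (simp_all add: vec_eq_iff forall_5 zeta_vq qn_def axis_def power2_eq_square)
  note o23 = off[OF w23 d2[THEN conjunct1] d3[THEN conjunct1] d2[THEN conjunct2] d3[THEN conjunct2]]
  have w24: "zeta (Quat (0) (1/2) (0) (1/2)) = 2 *\<^sub>R (axis 2 1 + axis 4 1) + 3 *\<^sub>R axis 5 1" "qn (Quat (0) (1/2) (0) (1/2)) < 1"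
    by (simp_all add: vec_eq_iff forall_5 zeta_vq qn_def axis_def power2_eq_square)
  note o24 = off[OF w24 d2[THEN conjunct1] d4[THEN conjunct1] d2[THEN conjunct2] d4[THEN conjunct2]]
  have w34: "zeta (Quat (0) (0) (1/2) (1/2)) = 2 *\<^sub>R (axis 3 1 + axis 4 1) + 3 *\<^sub>R axis 5 1" "qn (Quat (0) (0) (1/2) (1/2)) < 1"
    by (simp_all add: vec_eq_iff forall_5 zeta_vq qn_def axis_def power2_eq_square)
  note o34 = off[OF w34 d3[THEN conjunct1] d4[THEN conjunct1] d3[THEN conjunct2] d4[THEN conjunct2]]
  show ?thesis
    unfolding vec_eq_iff forall_5 using e0 d1 d2 d3 d4 o12 o13 o14 o23 o24 o34
      s[of 2 1] s[of 3 1] s[of 4 1] s[of 3 2] s[of 4 2] s[of 4 3] s[of 5 1] s[of 5 2] s[of 5 3] s[of 5 4]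
    by (simp add: zero_index)
qed


lemma Qform_transpose: "transpose Qform = Qform"
  unfolding transpose_def Qform_def by (rule vec_eq_iff[THEN iffD2], auto)

lemma Qform_sq: "Qform ** Qform = mat 1"
  by (simp add: vec_eq_iff forall_5 matrix_matrix_mult_def Qform_def sum_5 mat_def)

lemma det_Qform_sq: "det Qform * det Qform = 1"
  by (metis Qform_sq det_I det_mul)

lemma transpose_diff: "transpose (X - Y) = transpose X - transpose (Y::'a::ab_group_add^'n^'m)"
  by (simp add: vec_eq_iff transpose_def)

lemma qf_matrix: "v \<bullet> ((transpose M ** Qform ** M) *v v) = qf (M *v v)"
proof -
  have "v \<bullet> ((transpose M ** Qform ** M) *v v) = (M *v v) \<bullet> (Qform *v (M *v v))"
    by (metis dot_lmul_matrix matrix_vector_mul_assoc vector_transpose_matrix)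
  also have "\<dots> = qf (M *v v)"
    by (simp add: inner_vec_def sum_5 Qform_mult qf_def power2_eq_square)
  finally show ?thesis .
qed

lemma E_orth:
  assumes A: "A \<in> SU11H"
  shows "transpose (E A) ** Qform ** E A = Qform"
proof -
  define S where "S = transpose (E A) ** Qform ** E A - Qform"
  have "transpose S = S"
    unfolding S_def
    by (simp add: transpose_diff matrix_transpose_mul Qform_transpose matrix_mul_assoc)
  moreover have "zeta y \<bullet> (S *v zeta y) = 0" if y: "qn y < 1" for y
  proof -
    have "zeta y \<bullet> (S *v zeta y) = qf (E A *v zeta y) - qf (mat 1 *v zeta y)"
      unfolding S_def qf_matrix[symmetric] by (simp add: matrix_vector_mult_diff_rdistrib inner_diff_right)
    also have "\<dots> = 0" using qf_zeta[OF y] qf_zeta[OF moebius_B4[OF A y]] E_action[OF A y] by simp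
    finally show ?thesis .
  qed
  ultimately have "S = 0" by (rule polar)
  then show ?thesis unfolding S_def by simp
qed

lemma E_det_sq:
  assumes A: "A \<in> SU11H"
  shows "(det (E A))\<^sup>2 = 1"
proof -
  have "det (transpose (E A) ** Qform ** E A) = det Qform" using E_orth[OF A] by simp
  then have "det (E A) * det Qform * det (E A) = det Qform" by (simp add: det_mul)
  moreover have "det Qform \<noteq> 0" using det_Qform_sq by auto
  ultimately show ?thesis by (simp add: power2_eq_square)
qed

lemma E_55: "E A $ 5 $ 5 = qn (A$1$1) + qn (A$1$2)"
  by (simp add: E_def matrix_def Ephi_def Let_def axis_def xq_def qeq_iff)



definition Tm2 :: "real \<Rightarrow> quat \<Rightarrow> qmat" where
  "Tm2 m w = qmat (qr m) (qr m * w) (qr m * qcnj w) (qr m)"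

definition Tm :: "quat \<Rightarrow> qmat" where "Tm w = Tm2 (1 / sqrt (1 - qn w)) w"

lemma Tm2_sq: "Tm2 m w ** Tm2 m w = qmat (qr (m\<^sup>2 * (1 + qn w))) (qr (2 * m\<^sup>2) * w) (qr (2 * m\<^sup>2) * qcnj w) (qr (m\<^sup>2 * (1 + qn w)))"
  unfolding Tm2_def qmat_mult qmat_eq_iff
  by (simp add: qeq_iff qn_def power2_eq_square algebra_simps)

lemma Tm2_inv: "Tm2 m w ** Tm2 m (- w) = qmat (qr (m\<^sup>2 * (1 - qn w))) 0 0 (qr (m\<^sup>2 * (1 - qn w)))"
  unfolding Tm2_def qmat_mult qmat_eq_iff
  by (simp add: qeq_iff qn_def power2_eq_square algebra_simps)

lemma Tm_inv: "qn w < 1 \<Longrightarrow> Tm w ** Tm (- w) = mat 1"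
  unfolding Tm_def by (simp add: Tm2_inv qmat_one power_divide)

lemma Tm_SU: assumes "qn w < 1" shows "Tm w \<in> SU11H"
proof -
  define m where "m = 1 / sqrt (1 - qn w)"
  have m2: "m\<^sup>2 * (1 - qn w) = 1" using assms by (simp add: m_def power_divide)
  have 1: "qn (qr m) - qn (qr m * qcnj w) = 1" "qn (qr m) - qn (qr m * w) = 1"
    using m2 by (simp_all add: qn_mult algebra_simps)
  have 2: "qcnj (qr m) * (qr m * w) = qcnj (qr m * qcnj w) * qr m"
    by (simp add: qeq_iff algebra_simps)
  show ?thesis unfolding Tm_def m_def[symmetric] Tm2_def SU11H_iff su_def using 1 2 by simp
qed

lemma Tm_sq:
  assumes "qn w < 1"
  shows "\<exists>w'. qn w' < 1 \<and> Tm w' ** Tm w' = Tm w"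
proof -
  define r where "r = qn w"
  define s where "s = sqrt (1 - r)"
  define l where "l = 1 / (1 + s)"
  define w' where "w' = qr l * w"
  have r0: "r \<ge> 0" "r < 1" using assms qn_nonneg r_def by auto
  have s0: "s > 0" "s\<^sup>2 = 1 - r" using r0 by (auto simp: s_def)
  have qw': "qn w' = l\<^sup>2 * r" by (simp add: w'_def qn_mult r_def)
  have rr: "r = 1 - s\<^sup>2" using s0 by simp
  have s1: "1 + s \<noteq> 0" using s0 by simp
  have lr: "1 - l\<^sup>2 * r = 2 * s / (1 + s)" "1 + l\<^sup>2 * r = 2 / (1 + s)"
  proof -
    have f: "1 - s\<^sup>2 = (1 - s) * (1 + s)" by (simp add: power2_eq_square algebra_simps)
    have "l\<^sup>2 * r = (1 - s) / (1 + s)"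
      unfolding l_def rr f using s1 by (simp add: power2_eq_square)
    then show "1 - l\<^sup>2 * r = 2 * s / (1 + s)" "1 + l\<^sup>2 * r = 2 / (1 + s)"
      using s1 by (simp_all add: field_simps)
  qed
  have w'1: "qn w' < 1" unfolding qw' using lr s0 by (smt (verit) divide_pos_pos)
  define m where "m = 1 / sqrt (1 - qn w')"
  have m2: "m\<^sup>2 = (1 + s) / (2 * s)" using w'1 lr unfolding m_def qw' by (simp add: power_divide)
  have sp: "s * 2 + s * (s * 2) > 0" using s0 by (simp add: add_pos_pos)
  have e1: "m\<^sup>2 * (1 + qn w') = 1 / s" unfolding m2 qw' lr using s0 sp by (simp add: field_simps)
  have f: "2 * m\<^sup>2 * l = 1 / s" unfolding m2 l_def using s0 sp by (simp add: field_simps)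
  have e2: "qr (2 * m\<^sup>2) * w' = qr (1 / s) * w"
    unfolding w'_def mult.assoc[symmetric] qr_mult f ..
  have e3: "qr (2 * m\<^sup>2) * qcnj w' = qr (1 / s) * qcnj w"
    unfolding w'_def qcnj_mult qcnj_qr qr_comm[of l "qcnj w", symmetric] mult.assoc[symmetric] qr_mult f ..
  have "Tm w' ** Tm w' = Tm w"
    unfolding Tm_def m_def[symmetric] Tm2_sq e1 e2 e3 by (simp add: Tm2_def s_def r_def)
  then show ?thesis using w'1 by blast
qed


lemma diag_SU: "qn p = 1 \<Longrightarrow> qn q = 1 \<Longrightarrow> qmat p 0 0 q \<in> SU11H"
  by (simp add: SU11H_iff su_def)

lemma su_diag: "su p 0 c q \<Longrightarrow> c = 0 \<and> qn p = 1 \<and> qn q = 1"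
proof -
  assume s: "su p 0 c q"
  have "qcnj c * q = 0" using s by (simp add: su_def)
  moreover have "q \<noteq> 0" using su_facts(2)[OF s] .
  ultimately have c: "c = 0" by simp
  then show ?thesis using s by (simp add: su_def)
qed

lemma decomp:
  assumes A: "A \<in> SU11H"
  shows "\<exists>w p q. qn w < 1 \<and> qn p = 1 \<and> qn q = 1 \<and> A = Tm w ** qmat p 0 0 q"
proof -
  obtain a b c d where Aq: "A = qmat a b c d" by (metis qmat_eta)
  have s: "su a b c d" using A Aq SU11H_iff by simp
  note f = su_facts[OF s]
  define w where "w = b * inverse d"
  have qw: "qn w = qn b / qn d" by (simp add: w_def qn_mult qn_inverse)
  have w1: "qn w < 1" unfolding qw using f(8,10) f(4) by (simp add: field_simps)
  have w1': "qn (- w) < 1" using w1 by simp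
  define K where "K = Tm (- w) ** A"
  have KSU: "K \<in> SU11H" unfolding K_def by (rule SU_mult[OF Tm_SU[OF w1'] A])
  have K12: "K $ 1 $ 2 = 0"
  proof -
    have "K $ 1 $ 2 = qr (1 / sqrt (1 - qn w)) * (b - b * (inverse d * d))"
      by (simp add: K_def Tm_def Tm2_def Aq qmat_mult w_def algebra_simps mult.assoc)
    then show ?thesis using f(2) by simp
  qed
  have "su (K$1$1) 0 (K$2$1) (K$2$2)" using KSU K12 SU11H_iff' by simp
  then have d: "K$2$1 = 0" "qn (K$1$1) = 1" "qn (K$2$2) = 1" using su_diag by blast+
  have Kq: "K = qmat (K$1$1) 0 0 (K$2$2)" using d(1) K12 by (metis qmat_eta)
  have "Tm w ** K = A"
    unfolding K_def matrix_mul_assoc Tm_inv[OF w1] by simp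
  then show ?thesis using w1 d Kq by metis
qed

lemma unit_sqrt: "qn p = 1 \<Longrightarrow> \<exists>p'. qn p' = 1 \<and> p' * p' = p"
proof (cases "p = -1")
  case True
  then show ?thesis
    by (intro exI[of _ "Quat 0 1 0 0"]) (simp add: qeq_iff qn_def)
next
  case False
  assume p: "qn p = 1"
  have np: "1 + p \<noteq> 0" using False by (metis add_eq_0_iff)
  define t where "t = qn (1 + p)"
  have t0: "t > 0" using qn_pos[OF np] t_def by simp
  have sq: "(1 + p) * (1 + p) = qr t * p"
  proof -
    have c: "(qre p)\<^sup>2 + (qi p)\<^sup>2 + (qj p)\<^sup>2 + (qk p)\<^sup>2 = 1" using p by (simp add: qn_def)
    show ?thesis unfolding t_def qeq_iff using c
      by (simp add: qn_def power2_eq_square algebra_simps) algebra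
  qed
  define p' where "p' = qr (1 / sqrt t) * (1 + p)"
  have "qn p' = 1" using t0 by (simp add: p'_def qn_mult t_def[symmetric] power_divide)
  moreover have "p' * p' = p"
  proof -
    have "p' * p' = qr (1 / sqrt t) * qr (1 / sqrt t) * ((1 + p) * (1 + p))"
      unfolding p'_def by (simp add: qeq_iff algebra_simps)
    also have "\<dots> = qr (1 / t) * (qr t * p)" unfolding sq using t0 by (simp add: qr_mult)
    also have "\<dots> = p" using t0 by (simp add: mult.assoc[symmetric] qr_mult)
    finally show ?thesis .
  qed
  ultimately show ?thesis by blast
qed

lemma E_det_nonneg:
  assumes A: "A \<in> SU11H"
  shows "det (E A) \<ge> 0"
proof -
  obtain w p q where w: "qn w < 1" "qn p = 1" "qn q = 1" "A = Tm w ** qmat p 0 0 q"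
    using decomp[OF A] by blast
  obtain w' where w': "qn w' < 1" "Tm w' ** Tm w' = Tm w" using Tm_sq[OF w(1)] by blast
  obtain p' where p': "qn p' = 1" "p' * p' = p" using unit_sqrt[OF w(2)] by blast
  obtain q' where q': "qn q' = 1" "q' * q' = q" using unit_sqrt[OF w(3)] by blast
  have K: "qmat p' 0 0 q' ** qmat p' 0 0 q' = qmat p 0 0 q" using p' q' by (simp add: qmat_mult)
  have T'SU: "Tm w' \<in> SU11H" by (rule Tm_SU[OF w'(1)])
  have K'SU: "qmat p' 0 0 q' \<in> SU11H" by (rule diag_SU[OF p'(1) q'(1)])
  have "E A = (E (Tm w') ** E (Tm w')) ** (E (qmat p' 0 0 q') ** E (qmat p' 0 0 q'))"
    unfolding w(4) w'(2)[symmetric] K[symmetric]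
    by (simp add: E_mult SU_mult T'SU K'SU)
  then have "det (E A) = (det (E (Tm w')) * det (E (qmat p' 0 0 q')))\<^sup>2"
    by (simp add: det_mul power2_eq_square)
  then show ?thesis by simp
qed

lemma E_SO: assumes A: "A \<in> SU11H" shows "E A \<in> SO41p"
proof -
  have "det (E A) = 1" using E_det_sq[OF A] E_det_nonneg[OF A]
    by (metis abs_of_nonneg power2_eq_1_iff abs_neg_one abs_one)
  moreover have "E A $ 5 $ 5 > 0"
    using A unfolding E_55 SU11H_iff' using su_facts(9) qn_nonneg
    by (smt (verit))
  ultimately show ?thesis using E_orth[OF A] by (simp add: SO41p_def)
qed

lemma eta_E: assumes A: "A \<in> SU11H" shows "eta A = E A"
  unfolding eta_def
proof (rule the_equality)
  show "E A \<in> SO41p \<and> (\<forall>y\<in>B4. zeta (moebius A y) = E A *v zeta y)"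
    using E_SO[OF A] E_action[OF A] by (simp add: B4_iff)
next
  fix M assume "M \<in> SO41p \<and> (\<forall>y\<in>B4. zeta (moebius A y) = M *v zeta y)"
  then have "\<And>y. qn y < 1 \<Longrightarrow> M *v zeta y = E A *v zeta y"
    using E_action[OF A] by (simp add: B4_iff)
  then show "M = E A" by (rule E_unique)
qed



lemma entry_le: "\<bar>(X::real^'n^'m)$i$j\<bar> \<le> norm X"
  using order_trans[OF component_le_norm_cart Finite_Cartesian_Product.norm_nth_le] .

lemma norm_vec_le_sum: "norm (x::('a::real_normed_vector)^'n) \<le> (\<Sum>i\<in>UNIV. norm (x$i))"
  by (simp add: norm_vec_def L2_set_le_sum)

lemma norm_mult_le:
  fixes X Y :: "real^'n^'n"
  shows "norm (X ** Y) \<le> (real CARD('n))^3 * (norm X * norm Y)"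
proof -
  define c where "c = real CARD('n)"
  have e: "\<bar>(X ** Y)$i$j\<bar> \<le> c * (norm X * norm Y)" for i j
  proof -
    have "\<bar>(X ** Y)$i$j\<bar> = \<bar>\<Sum>k\<in>UNIV. X$i$k * Y$k$j\<bar>" by (simp add: matrix_matrix_mult_def)
    also have "\<dots> \<le> (\<Sum>k\<in>UNIV. \<bar>X$i$k\<bar> * \<bar>Y$k$j\<bar>)" by (rule order_trans[OF sum_abs]) (simp add: abs_mult)
    also have "\<dots> \<le> (\<Sum>k\<in>(UNIV::'n set). norm X * norm Y)"
      by (rule sum_mono, rule mult_mono) (auto simp: entry_le)
    finally show ?thesis by (simp add: c_def)
  qed
  have r: "norm ((X ** Y)$i) \<le> c * (c * (norm X * norm Y))" for i
  proof -
    have "norm ((X ** Y)$i) \<le> (\<Sum>j\<in>UNIV. \<bar>(X ** Y)$i$j\<bar>)" by (rule norm_le_l1_cart)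
    also have "\<dots> \<le> (\<Sum>j\<in>(UNIV::'n set). c * (norm X * norm Y))" by (rule sum_mono) (rule e)
    finally show ?thesis by (simp add: c_def)
  qed
  have "norm (X ** Y) \<le> (\<Sum>i\<in>UNIV. norm ((X ** Y)$i))" by (rule norm_vec_le_sum)
  also have "\<dots> \<le> (\<Sum>i\<in>(UNIV::'n set). c * (c * (norm X * norm Y)))" by (rule sum_mono) (rule r)
  finally show ?thesis by (simp add: c_def power3_eq_cube mult.assoc)
qed

lemma QM_entry: "(transpose M ** Qform ** M) $ a $ b =
   M$1$a * M$1$b + M$2$a * M$2$b + M$3$a * M$3$b + M$4$a * M$4$b - M$5$a * M$5$b"
proof -
  have q: "Qform ** M = (\<chi> i j. if i = 5 then - M$i$j else M$i$j)"
    by (simp add: vec_eq_iff forall_5 matrix_matrix_mult_def Qform_def sum_5)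
  show ?thesis
    unfolding matrix_mul_assoc[symmetric] q
    by (simp add: matrix_matrix_mult_def sum_5 transpose_def)
qed

lemma stab_bound:
  fixes M :: "real^5^5"
  assumes o: "transpose M ** Qform ** M = Qform" and f: "M *v e5 = e5"
  shows "\<bar>M$i$j\<bar> \<le> 1"
proof -
  have c5: "M$k$5 = (if k = 5 then 1 else 0)" for k
    using arg_cong[OF f, of "\<lambda>v. v$k"] unfolding e5_def col_entry by (simp add: axis_def)
  show ?thesis
  proof (cases "j = 5")
    case True then show ?thesis using c5[of i] by simp
  next
    case False
    have "(transpose M ** Qform ** M) $ j $ 5 = 0" using o False by (simp add: Qform_def)
    then have m5: "M$5$j = 0" unfolding QM_entry using c5 by simp
    have "(transpose M ** Qform ** M) $ j $ j = 1" using o False by (simp add: Qform_def)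
    then have s: "(M$1$j)\<^sup>2 + (M$2$j)\<^sup>2 + (M$3$j)\<^sup>2 + (M$4$j)\<^sup>2 = 1"
      unfolding QM_entry m5 by (simp add: power2_eq_square)
    have "(M$i$j)\<^sup>2 \<le> 1"
      using exhaust_5[of i] s m5 by (auto intro: order_trans[rotated] simp: add_nonneg_nonneg) (smt (verit) zero_le_power2)+
    then show ?thesis by (simp add: abs_square_le_1)
  qed
qed



lemma matrix_diff_rdistrib: "((A::'a::ring_1^'n^'m) - B) ** C = A ** C - B ** C"
  by (simp add: vec_eq_iff matrix_matrix_mult_def sum_subtractf algebra_simps)

lemma SO_inv:
  assumes "g \<in> SO41p"
  shows "g ** matrix_inv g = mat 1" "matrix_inv g ** g = mat 1"
proof -
  have "invertible g" using assms by (simp add: SO41p_def invertible_det_nz)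
  then show "g ** matrix_inv g = mat 1" "matrix_inv g ** g = mat 1" using invertible_inv by auto
qed

lemma conj_orth:
  assumes g: "g \<in> SO41p" and h: "h \<in> SO41p"
  shows "transpose (matrix_inv g ** h ** g) ** Qform ** (matrix_inv g ** h ** g) = Qform"
proof -
  define gi where "gi = matrix_inv g"
  have gg: "g ** gi = mat 1" "gi ** g = mat 1" using SO_inv[OF g] gi_def by auto
  have og: "transpose g ** Qform ** g = Qform" and oh: "transpose h ** Qform ** h = Qform"
    using g h by (auto simp: SO41p_def)
  have ogi: "transpose gi ** Qform ** gi = Qform"
  proof -
    have "transpose gi ** Qform ** gi = transpose gi ** (transpose g ** Qform ** g) ** gi" using og by simp
    also have "\<dots> = transpose (g ** gi) ** Qform ** (g ** gi)"
      by (simp add: matrix_transpose_mul matrix_mul_assoc)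
    also have "\<dots> = Qform" using gg by simp
    finally show ?thesis .
  qed
  have "transpose (gi ** h ** g) ** Qform ** (gi ** h ** g)
      = transpose g ** (transpose h ** (transpose gi ** Qform ** gi) ** h) ** g"
    by (simp add: matrix_transpose_mul matrix_mul_assoc)
  also have "\<dots> = Qform" using ogi oh og by simp
  finally show ?thesis unfolding gi_def .
qed

lemma norm_bound_entries:
  fixes N :: "real^5^5"
  assumes "\<And>i j. \<bar>N$i$j\<bar> \<le> 1"
  shows "norm N \<le> 25"
proof -
  have "norm N \<le> (\<Sum>i\<in>UNIV. norm (N$i))" by (rule norm_vec_le_sum)
  also have "\<dots> \<le> (\<Sum>i\<in>(UNIV::5 set). 5)"
  proof (rule sum_mono)
    fix i
    have "norm (N$i) \<le> (\<Sum>j\<in>UNIV. \<bar>N$i$j\<bar>)" by (rule norm_le_l1_cart)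
    also have "\<dots> \<le> (\<Sum>j\<in>(UNIV::5 set). 1)" by (rule sum_mono) (rule assms)
    finally show "norm (N$i) \<le> 5" by simp
  qed
  finally show ?thesis by simp
qed

lemma stab_norm_bound:
  assumes g: "g \<in> SO41p"
  shows "\<exists>C>0. \<forall>h. h \<in> SO41p \<and> h *v (g *v e5) = g *v e5 \<longrightarrow> norm h \<le> C"
proof -
  define gi where "gi = matrix_inv g"
  have gg: "g ** gi = mat 1" "gi ** g = mat 1" using SO_inv[OF g] gi_def by auto
  define C where "C = 125 * (norm g * (125 * (25 * norm gi))) + 1"
  have "C > 0" unfolding C_def by (intro add_nonneg_pos mult_nonneg_nonneg) auto
  moreover have "norm h \<le> C" if h: "h \<in> SO41p" "h *v (g *v e5) = g *v e5" for h
  proof -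
    define N where "N = gi ** h ** g"
    have o: "transpose N ** Qform ** N = Qform" unfolding N_def gi_def by (rule conj_orth[OF g h(1)])
    have "N *v e5 = gi *v (h *v (g *v e5))" by (simp add: N_def matrix_vector_mul_assoc matrix_mul_assoc)
    also have "\<dots> = e5" using h(2) gg by (simp add: matrix_vector_mul_assoc)
    finally have fe: "N *v e5 = e5" .
    have nN: "norm N \<le> 25" by (rule norm_bound_entries) (rule stab_bound[OF o fe])
    have hN: "h = g ** N ** gi"
    proof -
      have "g ** N ** gi = (g ** gi) ** h ** (g ** gi)" by (simp add: N_def matrix_mul_assoc)
      then show ?thesis using gg by simp
    qed
    have c: "real CARD(5) ^ 3 = 125" by simp
    have "norm h \<le> 125 * (norm g * norm (N ** gi))"
      unfolding hN matrix_mul_assoc[symmetric] using norm_mult_le[of g "N ** gi"] c by simp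
    also have "norm (N ** gi) \<le> 125 * (25 * norm gi)"
      using norm_mult_le[of N gi] c nN by (simp add: mult_right_mono order_trans)
    then have "125 * (norm g * norm (N ** gi)) \<le> 125 * (norm g * (125 * (25 * norm gi)))"
      by (intro mult_left_mono) auto
    finally show ?thesis unfolding C_def by simp
  qed
  ultimately show ?thesis by blast
qed



definition kp :: "real^5^5 \<Rightarrow> nat \<Rightarrow> real^5^5" where
  "kp k n = ((\<lambda>m. k ** m) ^^ n) (mat 1)"

lemma kp_0 [simp]: "kp k 0 = mat 1" by (simp add: kp_def)
lemma kp_Suc: "kp k (Suc n) = k ** kp k n" by (simp add: kp_def)
lemma kp_add: "kp k (m + n) = kp k m ** kp k n"
  by (induction m) (simp_all add: kp_Suc matrix_mul_assoc)
lemma kp_Suc': "kp k (Suc n) = kp k n ** k"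
  using kp_add[of k n 1] by (simp add: kp_Suc)

lemma stab_trivial:
  assumes G_sub: "G \<subseteq> SO41p" and G_grp: "is_subgroup_mat G" and G_disc: "discrete_set G"
    and G_tf: "torsion_free G" and g: "g \<in> SO41p" and k: "k \<in> G"
    and kx: "k *v (g *v e5) = g *v e5"
  shows "k = mat 1"
proof -
  define x where "x = g *v e5"
  obtain C where C: "C > 0" "\<And>h. h \<in> SO41p \<Longrightarrow> h *v x = x \<Longrightarrow> norm h \<le> C"
    using stab_norm_bound[OF g] unfolding x_def by blast
  have one: "mat 1 \<in> G" and cl: "\<And>a b. a \<in> G \<Longrightarrow> b \<in> G \<Longrightarrow> a ** b \<in> G"
    and inv: "\<And>a. a \<in> G \<Longrightarrow> invertible a \<and> matrix_inv a \<in> G"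
    using G_grp unfolding is_subgroup_mat_def by auto
  define ki where "ki = matrix_inv k"
  have ki: "ki \<in> G" "k ** ki = mat 1" "ki ** k = mat 1"
    using inv[OF k] invertible_inv ki_def by auto
  have kx': "k *v x = x" using kx x_def by simp
  have kix: "ki *v x = x"
  proof -
    have "ki *v x = ki *v (k *v x)" using kx' by simp
    also have "\<dots> = x" by (simp add: matrix_vector_mul_assoc ki)
    finally show ?thesis .
  qed
  have pG: "kp a n \<in> G" if "a \<in> G" for a n
    using that by (induction n) (simp_all add: kp_Suc one cl)
  have px: "kp a n *v x = x" if "a *v x = x" for a n
    using that by (induction n) (simp_all add: kp_Suc matrix_vector_mul_assoc[symmetric])
  have pinv: "kp k n ** kp ki n = mat 1" for n
  proof (induction n)
    case (Suc n)
    have "kp k (Suc n) ** kp ki (Suc n) = kp k n ** (k ** ki) ** kp ki n"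
      unfolding kp_Suc'[of k n] kp_Suc[of ki n] by (simp add: matrix_mul_assoc)
    then show ?case using Suc ki by simp
  qed simp
  have bk: "norm (kp k n) \<le> C" for n using C(2) pG[OF k] px[OF kx'] G_sub by blast
  have bki: "norm (kp ki n) \<le> C" for n using C(2) pG[OF ki(1)] px[OF kix] G_sub by blast
  have "bounded (range (kp k))" unfolding bounded_iff using bk by blast
  then obtain l r where r: "strict_mono r" "((kp k \<circ> r) \<longlongrightarrow> l) sequentially"
    using bounded_imp_convergent_subsequence by blast
  have t1: "(\<lambda>n. kp k (r (Suc n))) \<longlonglongrightarrow> l"
    using LIMSEQ_Suc[OF r(2)] by (simp add: o_def)
  have t0: "(\<lambda>n. kp k (r n)) \<longlonglongrightarrow> l" using r(2) by (simp add: o_def)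
  have t: "(\<lambda>n. kp k (r (Suc n)) - kp k (r n)) \<longlonglongrightarrow> 0"
    using tendsto_diff[OF t1 t0] by simp
  obtain e where e: "e > 0" "\<And>b. b \<in> G \<Longrightarrow> b \<noteq> mat 1 \<Longrightarrow> e \<le> dist (mat 1) b"
    using G_disc one unfolding discrete_set_def by blast
  define c where "c = e / (125 * C)"
  have c0: "c > 0" using e C by (simp add: c_def)
  obtain n where n: "norm (kp k (r (Suc n)) - kp k (r n)) < c"
    using t c0 unfolding LIMSEQ_iff by fastforce
  define d where "d = r (Suc n) - r n"
  have d0: "d > 0" using r(1) unfolding d_def strict_mono_def by (simp add: less_Suc_eq)
  have rd: "r (Suc n) = d + r n" using r(1) unfolding d_def strict_mono_def
    by (metis le_add_diff_inverse2 less_imp_le_nat lessI)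
  have eq: "kp k d - mat 1 = (kp k (r (Suc n)) - kp k (r n)) ** kp ki (r n)"
    unfolding rd kp_add matrix_diff_rdistrib matrix_mul_assoc[symmetric] pinv by simp
  have "norm (kp k d - mat 1) < e"
  proof -
    have "norm (kp k d - mat 1) \<le> 125 * (norm (kp k (r (Suc n)) - kp k (r n)) * norm (kp ki (r n)))"
      unfolding eq using norm_mult_le[of "kp k (r (Suc n)) - kp k (r n)" "kp ki (r n)"] by simp
    also have "\<dots> < 125 * (c * C)"
    proof -
      have "norm (kp k (r (Suc n)) - kp k (r n)) * norm (kp ki (r n)) \<le> norm (kp k (r (Suc n)) - kp k (r n)) * C"
        using bki[of "r n"] by (intro mult_left_mono) auto
      also have "\<dots> < c * C" using n C by simp
      finally show ?thesis by simp
    qed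
    also have "\<dots> = e" using C by (simp add: c_def)
    finally show ?thesis .
  qed
  then have "kp k d = mat 1" using e(2)[OF pG[OF k]] by (force simp: dist_norm norm_minus_commute)
  then show ?thesis using G_tf k d0 unfolding torsion_free_def kp_def by blast
qed


lemma  det_4:
  "det (A::'a::comm_ring_1^4^4) =
    A$1$1 * A$2$2 * A$3$3 * A$4$4 - A$1$1 * A$2$2 * A$3$4 * A$4$3
  - A$1$1 * A$2$3 * A$3$2 * A$4$4 + A$1$1 * A$2$3 * A$3$4 * A$4$2
  + A$1$1 * A$2$4 * A$3$2 * A$4$3 - A$1$1 * A$2$4 * A$3$3 * A$4$2
  - A$1$2 * A$2$1 * A$3$3 * A$4$4 + A$1$2 * A$2$1 * A$3$4 * A$4$3
  + A$1$2 * A$2$3 * A$3$1 * A$4$4 - A$1$2 * A$2$3 * A$3$4 * A$4$1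
  - A$1$2 * A$2$4 * A$3$1 * A$4$3 + A$1$2 * A$2$4 * A$3$3 * A$4$1
  + A$1$3 * A$2$1 * A$3$2 * A$4$4 - A$1$3 * A$2$1 * A$3$4 * A$4$2
  - A$1$3 * A$2$2 * A$3$1 * A$4$4 + A$1$3 * A$2$2 * A$3$4 * A$4$1
  + A$1$3 * A$2$4 * A$3$1 * A$4$2 - A$1$3 * A$2$4 * A$3$2 * A$4$1
  - A$1$4 * A$2$1 * A$3$2 * A$4$3 + A$1$4 * A$2$1 * A$3$3 * A$4$2
  + A$1$4 * A$2$2 * A$3$1 * A$4$3 - A$1$4 * A$2$2 * A$3$3 * A$4$1
  - A$1$4 * A$2$3 * A$3$1 * A$4$2 + A$1$4 * A$2$3 * A$3$2 * A$4$1"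
proof -
  have f1: "finite {2::4, 3, 4}" "1 \<notin> {2::4, 3, 4}" by auto
  have f2: "finite {3::4, 4}" "2 \<notin> {3::4, 4}" by auto
  have f3: "finite {4::4}" "3 \<notin> {4::4}" by auto
  show ?thesis
    unfolding det_def UNIV_4
    unfolding sum_over_permutations_insert[OF f1]
    unfolding sum_over_permutations_insert[OF f2]
    unfolding sum_over_permutations_insert[OF f3]
    unfolding permutes_sing
    by (simp add: sign_swap_id permutation_swap_id sign_compose permutation_compose sign_id swap_id_eq algebra_simps)
qed


lemma q2v_comp [simp]: "q2v a $ 1 = qre a" "q2v a $ 2 = qi a" "q2v a $ 3 = qj a" "q2v a $ 4 = qk a"
  by (simp_all add: q2v_def)
lemma v2q_comp [simp]: "qre (v2q v) = v$1" "qi (v2q v) = v$2" "qj (v2q v) = v$3" "qk (v2q v) = v$4"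
  by (simp_all add: v2q_def)
lemma v2q_q2v [simp]: "v2q (q2v a) = a" by (simp add: qeq_iff)
lemma q2v_v2q [simp]: "q2v (v2q v) = v" by (simp add: vec_eq_iff forall_4)

definition Lm :: "quat \<Rightarrow> real^4^4" where "Lm x = matrix (\<lambda>v. q2v (x * v2q v))"
definition Rm :: "quat \<Rightarrow> real^4^4" where "Rm x = matrix (\<lambda>v. q2v (v2q v * x))"

lemma lin_L: "linear (\<lambda>v. q2v (x * v2q v))"
  by (rule linearI) (simp_all add: vec_eq_iff forall_4 algebra_simps)
lemma lin_R: "linear (\<lambda>v. q2v (v2q v * x))"
  by (rule linearI) (simp_all add: vec_eq_iff forall_4 algebra_simps)

lemma Lm_mv: "Lm x *v v = q2v (x * v2q v)" by (simp add: Lm_def matrix_works lin_L)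
lemma Rm_mv: "Rm x *v v = q2v (v2q v * x)" by (simp add: Rm_def matrix_works lin_R)

lemma Lm_mult: "Lm a ** Lm b = Lm (a * b)"
  by (simp add: matrix_eq matrix_vector_mul_assoc[symmetric] Lm_mv mult.assoc)
lemma Lm_one: "Lm 1 = mat 1"
  by (simp add: matrix_eq Lm_mv)

lemma det_Lm: "det (Lm a) = (qn a)\<^sup>2"
  unfolding det_4 by (simp add: Lm_def matrix_def axis_def v2q_def qn_def power2_eq_square algebra_simps)

lemma det_LR: "det (Lm a - Rm b) =
   ((qre a - qre b)\<^sup>2 + ((qi a)\<^sup>2 + (qj a)\<^sup>2 + (qk a)\<^sup>2) + ((qi b)\<^sup>2 + (qj b)\<^sup>2 + (qk b)\<^sup>2))\<^sup>2
   - 4 * ((qi a)\<^sup>2 + (qj a)\<^sup>2 + (qk a)\<^sup>2) * ((qi b)\<^sup>2 + (qj b)\<^sup>2 + (qk b)\<^sup>2)"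
  unfolding det_4 by (simp add: Lm_def Rm_def matrix_def axis_def v2q_def power2_eq_square algebra_simps)


lemma matrix_diff_ldistrib: "(A::'a::ring_1^'n^'m) ** (B - C) = A ** B - A ** C"
  by (simp add: vec_eq_iff matrix_matrix_mult_def sum_subtractf algebra_simps)

lemma det_final:
  assumes p: "qn p = 1" and q: "qn q = 1"
  shows "det (mat 1 - Lm p ** Rm (qcnj q)) = 4 * (qre p - qre q)\<^sup>2"
proof -
  have "Lm p ** Lm (qcnj p) = mat 1" using p by (simp add: Lm_mult mult_cnj Lm_one)
  then have "mat 1 - Lm p ** Rm (qcnj q) = Lm p ** (Lm (qcnj p) - Rm (qcnj q))"
    by (simp add: matrix_diff_ldistrib)
  then have "det (mat 1 - Lm p ** Rm (qcnj q)) = det (Lm (qcnj p) - Rm (qcnj q))"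
    using p by (simp add: det_mul det_Lm)
  also have "\<dots> = ((qre p - qre q)\<^sup>2 + (1 - (qre p)\<^sup>2) + (1 - (qre q)\<^sup>2))\<^sup>2
       - 4 * (1 - (qre p)\<^sup>2) * (1 - (qre q)\<^sup>2)"
  proof -
    have a: "(qi p)\<^sup>2 + (qj p)\<^sup>2 + (qk p)\<^sup>2 = 1 - (qre p)\<^sup>2" using p by (simp add: qn_def)
    have b: "(qi q)\<^sup>2 + (qj q)\<^sup>2 + (qk q)\<^sup>2 = 1 - (qre q)\<^sup>2" using q by (simp add: qn_def)
    show ?thesis unfolding det_LR by (simp add: a b)
  qed
  also have "\<dots> = 4 * (qre p - qre q)\<^sup>2" by (simp add: power2_eq_square algebra_simps)
  finally show ?thesis .
qed

lemma deriv_part: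
  assumes F: "\<And>v. norm v < 1 \<Longrightarrow> F v = q2v (p * v2q v * inverse q)" and q: "qn q = 1"
  shows "frechet_derivative F (at 0) = (\<lambda>v. (Lm p ** Rm (qcnj q)) *v v)"
proof -
  define L where "L = (\<lambda>v::real^4. (Lm p ** Rm (qcnj q)) *v v)"
  have Lv: "L v = q2v (p * v2q v * inverse q)" for v
    by (simp add: L_def matrix_vector_mul_assoc[symmetric] Lm_mv Rm_mv unit_inverse[OF q] mult.assoc)
  have "(L has_derivative L) (at 0)" unfolding L_def by (rule bounded_linear_imp_has_derivative) simp
  then have "(F has_derivative L) (at 0)"
    by (rule has_derivative_transform_within_open[where s = "ball 0 1"]) (auto simp: F Lv)
  then show ?thesis unfolding L_def[symmetric] by (rule frechet_derivative_at[symmetric])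
qed



lemma qn_v2q: "qn (v2q v) = (norm v)\<^sup>2"
  unfolding power2_norm_eq_inner by (simp add: inner_vec_def sum_4 qn_def power2_eq_square)

lemma trace_Psi1: "trace (Psi1 h) = complex_of_real (2 * qre h)"
  by (simp add: trace_def sum_2 Psi1_def Let_def complex_eq_iff)

lemma SU_diag_mat: "qn p = 1 \<Longrightarrow> qn q = 1 \<Longrightarrow> moebius (qmat p 0 0 q) 0 = 0"
  by (simp add: moebius_qmat)

theorem theorem7p3:
  fixes G :: "(real^5^5) set" and Gh :: "qmat set"
    and f g c :: "real^5^5" and fh gh ch :: qmat and x :: "real^5"
  assumes G_sub: "G \<subseteq> SO41p" and G_grp: "is_subgroup_mat G"
    and G_disc: "discrete_set G" and G_tf: "torsion_free G" and G_cc: "cocompact G"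
    and Gh_sub: "Gh \<subseteq> SU11H" and Gh_grp: "is_subgroup_mat Gh"
    and Gh_iso: "bij_betw eta Gh G"
    and f_in: "f \<in> SO41p" and f_norm: "(\<lambda>a. f ** a ** matrix_inv f) ` G = G"
    and fh_in: "fh \<in> SU11H" and fh_lift: "eta fh = f"
    and fh_norm: "(\<lambda>a. fh ** a ** matrix_inv fh) ` Gh = Gh"
    and x_in: "x \<in> H4" and P_iso: "isolated_fixed_point G f x"
    and g_in: "g \<in> SO41p" and g_x: "g *v e5 = x"
    and gh_in: "gh \<in> SU11H" and gh_lift: "eta gh = g"
    and c_in: "c \<in> G" and c_fix: "c *v (f *v x) = x"
    and ch_in: "ch \<in> Gh" and ch_lift: "eta ch = c"
  shows "\<exists>p q. qnorm p = 1 \<and> qnorm q = 1 \<and>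
           matrix_inv gh ** ch ** fh ** gh = qmat p 0 0 q \<and>
           nu Gh G f fh g gh = complex_of_real (1 / (2 * (qre p - qre q)))"
proof -
  have chS: "ch \<in> SU11H" using ch_in Gh_sub by auto
  have gE: "g = E gh" using gh_lift eta_E[OF gh_in] by simp
  have fE: "f = E fh" using fh_lift eta_E[OF fh_in] by simp
  have cE: "c = E ch" using ch_lift eta_E[OF chS] by simp
  define ghi where "ghi = matrix_inv gh"
  have ghiS: "ghi \<in> SU11H" using SU_inv(5)[OF gh_in] ghi_def by simp
  have gg: "ghi ** gh = mat 1" "gh ** ghi = mat 1"
    using SU_inv(1,2,3)[OF gh_in] ghi_def by auto
  define ginv where "ginv = matrix_inv g"
  have ginvg: "ginv ** g = mat 1" "g ** ginv = mat 1" using SO_inv[OF g_in] ginv_def by auto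
  define A0 where "A0 = ghi ** ch ** fh ** gh"
  have A0S: "A0 \<in> SU11H" unfolding A0_def by (intro SU_mult ghiS chS fh_in gh_in)
  have ginv_act: "ginv *v zeta u = zeta (moebius ghi u)" if u: "qn u < 1" for u
  proof -
    have "g *v zeta (moebius ghi u) = zeta (moebius (gh ** ghi) u)"
      using E_action[OF gh_in moebius_B4[OF ghiS u]] moebius_mult[OF gh_in ghiS u] gE by simp
    then have "g *v zeta (moebius ghi u) = zeta u" using gg moebius_one by simp
    then have "ginv *v zeta u = ginv *v (g *v zeta (moebius ghi u))" by simp
    also have "\<dots> = zeta (moebius ghi u)" by (simp add: matrix_vector_mul_assoc ginvg)
    finally show ?thesis .
  qed
  have chain: "ginv *v (c *v (f *v (g *v zeta y))) = zeta (moebius A0 y)" if y: "qn y < 1" for y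
  proof -
    define y1 where "y1 = moebius gh y"
    define y2 where "y2 = moebius fh y1"
    define y3 where "y3 = moebius ch y2"
    have b1: "qn y1 < 1" unfolding y1_def by (rule moebius_B4[OF gh_in y])
    have b2: "qn y2 < 1" unfolding y2_def by (rule moebius_B4[OF fh_in b1])
    have b3: "qn y3 < 1" unfolding y3_def by (rule moebius_B4[OF chS b2])
    have "ginv *v (c *v (f *v (g *v zeta y))) = zeta (moebius ghi y3)"
      using E_action[OF gh_in y] E_action[OF fh_in b1] E_action[OF chS b2] ginv_act[OF b3]
      unfolding gE fE cE y1_def y2_def y3_def by simp
    also have "moebius ghi y3 = moebius A0 y"
    proof -
      have s1: "ghi ** ch \<in> SU11H" by (intro SU_mult ghiS chS)
      have s2: "ghi ** ch ** fh \<in> SU11H" by (intro SU_mult s1 fh_in)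
      have "moebius A0 y = moebius (ghi ** ch ** fh) y1"
        unfolding A0_def y1_def by (rule moebius_mult[OF s2 gh_in y])
      also have "\<dots> = moebius (ghi ** ch) y2" unfolding y2_def by (rule moebius_mult[OF s1 fh_in b1])
      also have "\<dots> = moebius ghi y3" unfolding y3_def by (rule moebius_mult[OF ghiS chS b2])
      finally show ?thesis by simp
    qed
    finally show ?thesis .
  qed
  have x_eq: "x = zeta (moebius gh 0)"
    using E_action[OF gh_in, of 0] g_x gE by (simp add: zeta_0)
  have "zeta (moebius A0 0) = e5"
  proof -
    have "zeta (moebius A0 0) = ginv *v (c *v (f *v (g *v zeta 0)))" using chain[of 0] by simp
    also have "\<dots> = ginv *v x" using c_fix g_x by (simp add: zeta_0)
    also have "\<dots> = e5" unfolding g_x[symmetric] by (simp add: matrix_vector_mul_assoc ginvg)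
    finally show ?thesis .
  qed
  then have A00: "moebius A0 0 = 0"
    using zeta_inj[OF moebius_B4[OF A0S, of 0]] zeta_0 by simp
  obtain p b c' q where A0q: "A0 = qmat p b c' q" by (metis qmat_eta)
  have su0: "su p b c' q" using A0S A0q SU11H_iff by simp
  have "b * inverse q = 0" using A00 A0q by (simp add: moebius_qmat)
  then have b0: "b = 0" using su_facts(2)[OF su0] by simp
  then have dd: "c' = 0" "qn p = 1" "qn q = 1" using su_diag su0 by auto
  have A0d: "A0 = qmat p 0 0 q" using A0q b0 dd by simp
  have s0Spin: "qmat p 0 0 q \<in> Spin4" using dd unfolding Spin4_def by (auto simp: qnorm_1_iff)
  have Gh1: "mat 1 \<in> Gh" and Ghcl: "\<And>a b. a \<in> Gh \<Longrightarrow> b \<in> Gh \<Longrightarrow> a ** b \<in> Gh"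
    and Ghinv: "\<And>a. a \<in> Gh \<Longrightarrow> invertible a \<and> matrix_inv a \<in> Gh"
    using Gh_grp unfolding is_subgroup_mat_def by auto
  have ghA0: "gh ** A0 = ch ** fh ** gh"
    unfolding A0_def by (simp add: matrix_mul_assoc gg)
  have coset: "rcoset_q Gh (fh ** gh) = rcoset_q Gh (gh ** qmat p 0 0 q)"
  proof -
    define chi where "chi = matrix_inv ch"
    have chi: "chi \<in> Gh" "chi ** ch = mat 1" using Ghinv[OF ch_in] invertible_inv chi_def by auto
    have "(\<lambda>a. a ** (fh ** gh)) ` Gh = (\<lambda>a. a ** (ch ** fh ** gh)) ` Gh"
    proof
      show "(\<lambda>a. a ** (fh ** gh)) ` Gh \<subseteq> (\<lambda>a. a ** (ch ** fh ** gh)) ` Gh"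
      proof
        fix z assume "z \<in> (\<lambda>a. a ** (fh ** gh)) ` Gh"
        then obtain a where a: "a \<in> Gh" "z = a ** (fh ** gh)" by blast
        have "(a ** chi) ** (ch ** fh ** gh) = a ** (chi ** ch) ** fh ** gh" by (simp add: matrix_mul_assoc)
        then have "z = (a ** chi) ** (ch ** fh ** gh)" using a chi by (simp add: matrix_mul_assoc)
        moreover have "a ** chi \<in> Gh" using a chi Ghcl by blast
        ultimately show "z \<in> (\<lambda>a. a ** (ch ** fh ** gh)) ` Gh" by blast
      qed
      show "(\<lambda>a. a ** (ch ** fh ** gh)) ` Gh \<subseteq> (\<lambda>a. a ** (fh ** gh)) ` Gh"
      proof
        fix z assume "z \<in> (\<lambda>a. a ** (ch ** fh ** gh)) ` Gh"
        then obtain a where a: "a \<in> Gh" "z = a ** (ch ** fh ** gh)" by blast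
        have "z = (a ** ch) ** (fh ** gh)" using a by (simp add: matrix_mul_assoc)
        moreover have "a ** ch \<in> Gh" using a ch_in Ghcl by blast
        ultimately show "z \<in> (\<lambda>a. a ** (fh ** gh)) ` Gh" by blast
      qed
    qed
    then show ?thesis unfolding rcoset_q_def ghA0[symmetric] A0d .
  qed
  have eta_img: "eta ` Gh = G" and eta_inj: "inj_on eta Gh" using Gh_iso by (auto simp: bij_betw_def)
  have uniq: "s' = qmat p 0 0 q"
    if s': "s' \<in> Spin4" "rcoset_q Gh (fh ** gh) = rcoset_q Gh (gh ** s')" for s'
  proof -
    obtain p' q' where pq': "s' = qmat p' 0 0 q'" "qnorm p' = 1" "qnorm q' = 1"
      using s'(1) unfolding Spin4_def by blast
    have s'S: "s' \<in> SU11H" using pq' by (simp add: diag_SU qnorm_1_iff)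
    have s'0: "moebius s' 0 = 0" using pq' by (simp add: moebius_qmat)
    have "fh ** gh \<in> rcoset_q Gh (fh ** gh)" unfolding rcoset_q_def using Gh1
      by (metis image_eqI matrix_mul_lid)
    then obtain h where h: "h \<in> Gh" "fh ** gh = h ** (gh ** s')" using s'(2) unfolding rcoset_q_def by auto
    define k where "k = ch ** h"
    have kG: "k \<in> Gh" unfolding k_def using ch_in h(1) Ghcl by blast
    have kS: "k \<in> SU11H" using kG Gh_sub by auto
    have ghA0': "gh ** A0 = k ** gh ** s'"
    proof -
      have "ch ** fh ** gh = ch ** (fh ** gh)" by (simp add: matrix_mul_assoc)
      also have "\<dots> = ch ** (h ** (gh ** s'))" using h(2) by simp
      also have "\<dots> = k ** gh ** s'" by (simp add: k_def matrix_mul_assoc)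
      finally show ?thesis unfolding ghA0 .
    qed
    have "moebius (k ** gh) 0 = moebius gh 0"
    proof -
      have "moebius (k ** gh) 0 = moebius (k ** gh) (moebius s' 0)" using s'0 by simp
      also have "\<dots> = moebius (k ** gh ** s') 0"
        using moebius_mult[OF SU_mult[OF kS gh_in] s'S, of 0] by simp
      also have "\<dots> = moebius (gh ** A0) 0" using ghA0' by simp
      also have "\<dots> = moebius gh (moebius A0 0)" using moebius_mult[OF gh_in A0S, of 0] by simp
      finally show ?thesis using A00 by simp
    qed
    then have "E k *v x = x"
      unfolding x_eq using E_action[OF kS moebius_B4[OF gh_in, of 0]] moebius_mult[OF kS gh_in, of 0]
      by simp
    moreover have "E k \<in> G" using eta_img kG eta_E[OF kS] by force
    ultimately have "E k = mat 1"
      using stab_trivial[OF G_sub G_grp G_disc G_tf g_in] g_x by blast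
    then have "eta k = eta (mat 1)" using eta_E[OF kS] eta_E[OF one_SU] E_one by simp
    then have k1: "k = mat 1" using eta_inj kG Gh1 by (auto dest: inj_onD)
    have "A0 = ghi ** (gh ** A0)" by (simp add: matrix_mul_assoc gg)
    also have "\<dots> = s'" using ghA0' k1 by (simp add: matrix_mul_assoc gg)
    finally show ?thesis using A0d by simp
  qed
  have theS: "(THE s. s \<in> Spin4 \<and> rcoset_q Gh (fh ** gh) = rcoset_q Gh (gh ** s)) = qmat p 0 0 q"
  proof (rule the_equality)
    show "qmat p 0 0 q \<in> Spin4 \<and> rcoset_q Gh (fh ** gh) = rcoset_q Gh (gh ** qmat p 0 0 q)"
      using s0Spin coset by blast
  next
    fix s assume "s \<in> Spin4 \<and> rcoset_q Gh (fh ** gh) = rcoset_q Gh (gh ** s)"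
    then show "s = qmat p 0 0 q" using uniq by blast
  qed
  have theC: "(THE c'. c' \<in> G \<and> c' *v (f *v x) = x) = c"
  proof (rule the_equality)
    show "c \<in> G \<and> c *v (f *v x) = x" using c_in c_fix by simp
  next
    fix c' assume c': "c' \<in> G \<and> c' *v (f *v x) = x"
    have Gi: "\<And>a. a \<in> G \<Longrightarrow> invertible a \<and> matrix_inv a \<in> G"
      and Gcl: "\<And>a b. a \<in> G \<Longrightarrow> b \<in> G \<Longrightarrow> a ** b \<in> G"
      using G_grp unfolding is_subgroup_mat_def by auto
    define ci where "ci = matrix_inv c"
    have ci: "ci \<in> G" "ci ** c = mat 1" "c ** ci = mat 1" using Gi[OF c_in] invertible_inv ci_def by auto
    have cix: "ci *v x = f *v x"
    proof -
      have "ci *v x = ci *v (c *v (f *v x))" using c_fix by simp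
      also have "\<dots> = (ci ** c) *v (f *v x)" by (rule matrix_vector_mul_assoc)
      finally show ?thesis using ci(2) by simp
    qed
    define k where "k = c' ** ci"
    have kG: "k \<in> G" unfolding k_def using c' ci Gcl by blast
    have "k *v x = x" unfolding k_def using c' cix by (simp add: matrix_vector_mul_assoc[symmetric])
    then have "k = mat 1" using stab_trivial[OF G_sub G_grp G_disc G_tf g_in kG] g_x by simp
    then have "c' ** ci ** c = c" unfolding k_def by simp
    then show "c' = c" using ci by (simp add: matrix_mul_assoc[symmetric])
  qed
  define F where "F = (\<lambda>v::real^4. q2v (zeta_inv (matrix_inv g *v (c *v (f *v (g *v zeta (v2q v)))))))"
  have Fv: "F v = q2v (p * v2q v * inverse q)" if "norm v < 1" for v
  proof -
    have y: "qn (v2q v) < 1" using that by (simp add: qn_v2q power_less_one_iff)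
    have "F v = q2v (zeta_inv (zeta (moebius A0 (v2q v))))"
      unfolding F_def ginv_def[symmetric] using chain[OF y] by simp
    also have "\<dots> = q2v (moebius A0 (v2q v))" using zeta_inv_zeta[OF moebius_B4[OF A0S y]] by simp
    also have "\<dots> = q2v (p * v2q v * inverse q)" by (simp add: A0d moebius_qmat)
    finally show ?thesis .
  qed
  have D: "frechet_derivative F (at 0) = (\<lambda>v. (Lm p ** Rm (qcnj q)) *v v)"
    by (rule deriv_part[OF Fv dd(3)])
  have Dm: "(\<lambda>v. v - frechet_derivative F (at 0) v) = (\<lambda>v. (mat 1 - Lm p ** Rm (qcnj q)) *v v)"
    unfolding D by (simp add: matrix_vector_mult_diff_rdistrib)
  have absdet: "abs_det_I_minus_dphi G f g = 4 * (qre p - qre q)\<^sup>2"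
    unfolding abs_det_I_minus_dphi_def Let_def g_x theC F_def[symmetric] Dm matrix_of_matrix_vector_mul
      det_final[OF dd(2,3)] by simp
  have nu: "nu Gh G f fh g gh = complex_of_real (1 / (2 * (qre p - qre q)))"
  proof -
    define d where "d = qre p - qre q"
    have r: "(2 * qre p - 2 * qre q) / \<bar>4 * d\<^sup>2\<bar> = 1 / (2 * d)"
    proof -
      have a: "\<bar>4 * d\<^sup>2\<bar> = 4 * d\<^sup>2" by simp
      have b: "2 * qre p - 2 * qre q = 2 * d" by (simp add: d_def)
      show ?thesis unfolding a b by (cases "d = 0") (simp_all add: power2_eq_square)
    qed
    show ?thesis
      unfolding nu_def Let_def theS absdet Delta_plus_def Delta_minus_def trace_Psi1 d_def[symmetric]
        of_real_diff[symmetric] of_real_divide[symmetric] qmat_nth using r by simp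
  qed
  show ?thesis
    using dd A0d nu unfolding A0_def ghi_def by (intro exI[of _ p] exI[of _ q]) (simp add: qnorm_1_iff)
qed

end
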